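(* Let $\mathcal C$ be a small cylinder category. Weak equivalences in $\widetilde{\mathcal C}$ satisfy 2-out-of-3: for composable $f:X\to Y$, $g:Y\to Z$ in $\widetilde{\mathcal C}$, if two of $f$, $g$, $g\circ f$ are weak equivalences then so is the third.
   Context: A cylinder category is a category $\mathcal C$ with two classes of morphisms, the cofibrations and the weak equivalences (morphisms in both classes are called trivial cofibrations), such that: (1) both classes contain all isomorphisms and are closed under composition; (2) weak equivalences satisfy 2-out-of-6: if $f,g,h$ are composable and $f\circ g$, $g\circ h$ are weak equivalences then $f,g,h,f\circ g\circ h$ are; (3) $\mathcal C$ has an initial object $0$ and every $0\to X$ is a cofibration; (4) pushouts of cofibrations along arbitrary maps exist and are cofibrations; (5) pushouts of trivial cofibrations are trivial cofibrations; (6) for every object $X$ the codiagonal $X\sqcup X\to X$ factors as a cofibration $X\sqcup X\hookrightarrow IX$ followed by a weak equivalence $IX\to X$; (7) every trivial cofibration admits a retraction. For a cofibration $A\hookrightarrow B$, a relative cylinder object is a factorization $B\sqcup_A B\hookrightarrow I_AB\xrightarrow{\sim}B$ of the codiagonal into a cofibration followed by a weak equivalence. For a small cylinder category $\mathcal C$, $\widetilde{\mathcal C}$ is the category of presheaves of sets on $\mathcal C$ sending the initial object to a singleton and pushouts along cofibrations to pullbacks of sets; $\mathcal C$ is identified with its image under the Yoneda embedding. A morphism $f:X\to Y$ of $\widetilde{\mathcal C}$ is a weak equivalence if for every cofibration $i:A\hookrightarrow B$ of $\mathcal C$ and every commutative square with top $u:A\to X$ and bottom $w:B\to Y$ (so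 $f\circ u=w\circ i$), there exist $a:B\to X$ with $a\circ i=u$ and $h:I_AB\to Y$ for some relative cylinder object such that $h$ restricted along the two inclusions $B\to I_AB$ is $f\circ a$ and $w$. *)

theory Defs
  imports Main
begin

record ('o, 'm) category =
  Obj :: "'o set"
  Mor :: "'m set"
  Dom :: "'m \<Rightarrow> 'o"
  Cod :: "'m \<Rightarrow> 'o"
  Id  :: "'o \<Rightarrow> 'm"
  Comp :: "'m \<Rightarrow> 'm \<Rightarrow> 'm"   (* Comp g f = g \<circ> f *)

definition hom :: "('o, 'm, 'x) category_scheme \<Rightarrow> 'o \<Rightarrow> 'o \<Rightarrow> 'm set" where
  "hom C a b = {f \<in> Mor C. Dom C f = a \<and> Cod C f = b}"

definition is_category :: "('o, 'm, 'x) category_scheme \<Rightarrow> bool" where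
  "is_category C \<longleftrightarrow>
     (\<forall>f\<in>Mor C. Dom C f \<in> Obj C \<and> Cod C f \<in> Obj C) \<and>
     (\<forall>a\<in>Obj C. Id C a \<in> hom C a a) \<and>
     (\<forall>f\<in>Mor C. \<forall>g\<in>Mor C. Cod C f = Dom C g \<longrightarrow> Comp C g f \<in> hom C (Dom C f) (Cod C g)) \<and>
     (\<forall>f\<in>Mor C. Comp C f (Id C (Dom C f)) = f \<and> Comp C (Id C (Cod C f)) f = f) \<and>
     (\<forall>f\<in>Mor C. \<forall>g\<in>Mor C. \<forall>h\<in>Mor C. Cod C f = Dom C g \<longrightarrow> Cod C g = Dom C h \<longrightarrow>
        Comp C h (Comp C g f) = Comp C (Comp C h g) f)"

definition iso :: "('o, 'm, 'x) category_scheme \<Rightarrow> 'm \<Rightarrow> bool" where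
  "iso C f \<longleftrightarrow> f \<in> Mor C \<and> (\<exists>g\<in>hom C (Cod C f) (Dom C f).
      Comp C g f = Id C (Dom C f) \<and> Comp C f g = Id C (Cod C f))"

definition initial :: "('o, 'm, 'x) category_scheme \<Rightarrow> 'o \<Rightarrow> bool" where
  "initial C z \<longleftrightarrow> z \<in> Obj C \<and> (\<forall>a\<in>Obj C. \<exists>!f. f \<in> hom C z a)"

text \<open>Pushout square: for f : a -> b and g : a -> c, the maps p : b -> d and q : c -> d
  form a pushout (so q is the pushout of f along g, p the pushout of g along f).\<close>
definition is_pushout :: "('o, 'm, 'x) category_scheme \<Rightarrow> 'm \<Rightarrow> 'm \<Rightarrow> 'm \<Rightarrow> 'm \<Rightarrow> bool" where
  "is_pushout C f g p q \<longleftrightarrow>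
     f \<in> Mor C \<and> g \<in> Mor C \<and> Dom C f = Dom C g \<and>
     p \<in> hom C (Cod C f) (Cod C p) \<and> q \<in> hom C (Cod C g) (Cod C p) \<and>
     Comp C p f = Comp C q g \<and>
     (\<forall>e\<in>Obj C. \<forall>u\<in>hom C (Cod C f) e. \<forall>v\<in>hom C (Cod C g) e.
        Comp C u f = Comp C v g \<longrightarrow>
        (\<exists>!k. k \<in> hom C (Cod C p) e \<and> Comp C k p = u \<and> Comp C k q = v))"

text \<open>Relative cylinder object for a cofibration i : A -> B: a pushout B +_A B (with
  coprojections p, q), a cofibration j : B +_A B -> I and a weak equivalence r : I -> B
  whose composite r o j is the codiagonal (r o j o p = id, r o j o q = id).\<close>

record ('o, 'm) cyl_category = "('o, 'm) category" +
  Cof :: "'m set"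
  WE  :: "'m set"

definition rel_cylinder :: "('o, 'm, 'x) cyl_category_scheme \<Rightarrow> 'm \<Rightarrow> 'm \<Rightarrow> 'm \<Rightarrow> 'm \<Rightarrow> 'm \<Rightarrow> bool" where
  "rel_cylinder C i p q j r \<longleftrightarrow>
     is_pushout C i i p q \<and> j \<in> Cof C \<and> r \<in> WE C \<and>
     j \<in> hom C (Cod C p) (Cod C j) \<and> r \<in> hom C (Cod C j) (Cod C i) \<and>
     Comp C r (Comp C j p) = Id C (Cod C i) \<and> Comp C r (Comp C j q) = Id C (Cod C i)"

definition cylinder_category :: "('o, 'm, 'x) cyl_category_scheme \<Rightarrow> bool" where
  "cylinder_category C \<longleftrightarrow>
     is_category C \<and> Cof C \<subseteq> Mor C \<and> WE C \<subseteq> Mor C \<and>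
     \<comment> \<open>(1)\<close>
     (\<forall>f. iso C f \<longrightarrow> f \<in> Cof C \<and> f \<in> WE C) \<and>
     (\<forall>f\<in>Cof C. \<forall>g\<in>Cof C. Cod C f = Dom C g \<longrightarrow> Comp C g f \<in> Cof C) \<and>
     (\<forall>f\<in>WE C. \<forall>g\<in>WE C. Cod C f = Dom C g \<longrightarrow> Comp C g f \<in> WE C) \<and>
     \<comment> \<open>(2) 2-out-of-6, for composable h, g, f (f o g o h)\<close>
     (\<forall>f\<in>Mor C. \<forall>g\<in>Mor C. \<forall>h\<in>Mor C. Cod C h = Dom C g \<longrightarrow> Cod C g = Dom C f \<longrightarrow>
        Comp C f g \<in> WE C \<longrightarrow> Comp C g h \<in> WE C \<longrightarrow>
        f \<in> WE C \<and> g \<in> WE C \<and> h \<in> WE C \<and> Comp C f (Comp C g h) \<in> WE C) \<and>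
     \<comment> \<open>(3)\<close>
     (\<exists>z. initial C z) \<and>
     (\<forall>z. initial C z \<longrightarrow> (\<forall>x\<in>Obj C. hom C z x \<subseteq> Cof C)) \<and>
     \<comment> \<open>(4)\<close>
     (\<forall>f\<in>Cof C. \<forall>g\<in>Mor C. Dom C g = Dom C f \<longrightarrow>
        (\<exists>p q. is_pushout C f g p q) \<and> (\<forall>p q. is_pushout C f g p q \<longrightarrow> q \<in> Cof C)) \<and>
     \<comment> \<open>(5)\<close>
     (\<forall>f\<in>Cof C \<inter> WE C. \<forall>g p q. is_pushout C f g p q \<longrightarrow> q \<in> Cof C \<inter> WE C) \<and>
     \<comment> \<open>(6) the codiagonal of every coproduct X + X factors as cofibration then weak equivalence\<close>
     (\<forall>x\<in>Obj C. \<forall>z e p q. initial C z \<longrightarrow> e \<in> hom C z x \<longrightarrow> is_pushout C e e p q \<longrightarrow>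
        (\<exists>j r. j \<in> Cof C \<and> r \<in> WE C \<and>
           j \<in> hom C (Cod C p) (Cod C j) \<and> r \<in> hom C (Cod C j) x \<and>
           Comp C r (Comp C j p) = Id C x \<and> Comp C r (Comp C j q) = Id C x)) \<and>
     \<comment> \<open>(7)\<close>
     (\<forall>f\<in>Cof C \<inter> WE C. \<exists>r\<in>hom C (Cod C f) (Dom C f). Comp C r f = Id C (Dom C f))"

record ('o, 'm, 'v) presheaf =
  PS :: "'o \<Rightarrow> 'v set"
  PM :: "'m \<Rightarrow> 'v \<Rightarrow> 'v"   (* for f : a -> b, PM f : PS b -> PS a *)

definition is_presheaf :: "('o, 'm, 'x) cyl_category_scheme \<Rightarrow> ('o, 'm, 'v) presheaf \<Rightarrow> bool" where
  "is_presheaf C F \<longleftrightarrow>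
     (\<forall>f\<in>Mor C. \<forall>x\<in>PS F (Cod C f). PM F f x \<in> PS F (Dom C f)) \<and>
     (\<forall>a\<in>Obj C. \<forall>x\<in>PS F a. PM F (Id C a) x = x) \<and>
     (\<forall>f\<in>Mor C. \<forall>g\<in>Mor C. Cod C f = Dom C g \<longrightarrow>
        (\<forall>x\<in>PS F (Cod C g). PM F (Comp C g f) x = PM F f (PM F g x))) \<and>
     \<comment> \<open>initial object goes to a singleton\<close>
     (\<forall>z. initial C z \<longrightarrow> (\<exists>v. PS F z = {v})) \<and>
     \<comment> \<open>pushouts along cofibrations go to pullbacks of sets\<close>
     (\<forall>f\<in>Cof C. \<forall>g p q. is_pushout C f g p q \<longrightarrow>
        bij_betw (\<lambda>x. (PM F p x, PM F q x)) (PS F (Cod C p))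
          {(y, w). y \<in> PS F (Cod C f) \<and> w \<in> PS F (Cod C g) \<and> PM F f y = PM F g w})"

definition presheaf_mor :: "('o, 'm, 'x) cyl_category_scheme \<Rightarrow> ('o, 'm, 'v) presheaf \<Rightarrow>
    ('o, 'm, 'v) presheaf \<Rightarrow> ('o \<Rightarrow> 'v \<Rightarrow> 'v) \<Rightarrow> bool" where
  "presheaf_mor C F G \<eta> \<longleftrightarrow>
     (\<forall>a\<in>Obj C. \<forall>x\<in>PS F a. \<eta> a x \<in> PS G a) \<and>
     (\<forall>f\<in>Mor C. \<forall>x\<in>PS F (Cod C f). \<eta> (Dom C f) (PM F f x) = PM G f (\<eta> (Cod C f) x))"

definition ps_comp :: "('o \<Rightarrow> 'v \<Rightarrow> 'v) \<Rightarrow> ('o \<Rightarrow> 'v \<Rightarrow> 'v) \<Rightarrow> ('o \<Rightarrow> 'v \<Rightarrow> 'v)" where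
  "ps_comp g f = (\<lambda>a x. g a (f a x))"

text \<open>Weak equivalences in \<open>\<widetilde>C\<close>; via Yoneda a map B -> X is an element of X(B).\<close>
definition ps_weq :: "('o, 'm, 'x) cyl_category_scheme \<Rightarrow> ('o, 'm, 'v) presheaf \<Rightarrow>
    ('o, 'm, 'v) presheaf \<Rightarrow> ('o \<Rightarrow> 'v \<Rightarrow> 'v) \<Rightarrow> bool" where
  "ps_weq C X Y f \<longleftrightarrow>
     (\<forall>i\<in>Cof C. \<forall>u\<in>PS X (Dom C i). \<forall>w\<in>PS Y (Cod C i).
        f (Dom C i) u = PM Y i w \<longrightarrow>
        (\<exists>a\<in>PS X (Cod C i). PM X i a = u \<and>
           (\<exists>p q j r h. rel_cylinder C i p q j r \<and> h \<in> PS Y (Cod C j) \<and>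
              PM Y (Comp C j p) h = f (Cod C i) a \<and> PM Y (Comp C j q) h = w)))"

end

theory Submission
  imports Defs
begin

locale cyl =
  fixes C :: "('o, 'm, 'x) cyl_category_scheme"
  assumes cc: "cylinder_category C"
begin

abbreviation cmp (infixr "\<cdot>" 75) where "g \<cdot> f \<equiv> Comp C g f"

lemma cat: "is_category C" using cc by (simp add: cylinder_category_def)

lemma mor_dom [simp]: "f \<in> Mor C \<Longrightarrow> Dom C f \<in> Obj C"
  using cat by (simp add: is_category_def)
lemma mor_cod [simp]: "f \<in> Mor C \<Longrightarrow> Cod C f \<in> Obj C"
  using cat by (simp add: is_category_def)

lemma comp_props:
  assumes "f \<in> Mor C" "g \<in> Mor C" "Cod C f = Dom C g"
  shows "g \<cdot> f \<in> Mor C \<and> Dom C (g \<cdot> f) = Dom C f \<and> Cod C (g \<cdot> f) = Cod C g"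
  using cat assms unfolding is_category_def hom_def by blast

lemma comp_mor [simp]: "f \<in> Mor C \<Longrightarrow> g \<in> Mor C \<Longrightarrow> Cod C f = Dom C g \<Longrightarrow> g \<cdot> f \<in> Mor C"
  using comp_props by blast
lemma dom_comp [simp]: "f \<in> Mor C \<Longrightarrow> g \<in> Mor C \<Longrightarrow> Cod C f = Dom C g \<Longrightarrow> Dom C (g \<cdot> f) = Dom C f"
  using comp_props by blast
lemma cod_comp [simp]: "f \<in> Mor C \<Longrightarrow> g \<in> Mor C \<Longrightarrow> Cod C f = Dom C g \<Longrightarrow> Cod C (g \<cdot> f) = Cod C g"
  using comp_props by blast

lemma assoc [simp]:
  "f \<in> Mor C \<Longrightarrow> g \<in> Mor C \<Longrightarrow> h \<in> Mor C \<Longrightarrow> Cod C f = Dom C g \<Longrightarrow> Cod C g = Dom C h \<Longrightarrow>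
   (h \<cdot> g) \<cdot> f = h \<cdot> (g \<cdot> f)"
  using cat unfolding is_category_def by metis

lemma id_props: "a \<in> Obj C \<Longrightarrow> Id C a \<in> Mor C \<and> Dom C (Id C a) = a \<and> Cod C (Id C a) = a"
  using cat unfolding is_category_def hom_def by blast
lemma id_mor [simp]: "a \<in> Obj C \<Longrightarrow> Id C a \<in> Mor C" using id_props by blast
lemma id_dom [simp]: "a \<in> Obj C \<Longrightarrow> Dom C (Id C a) = a" using id_props by blast
lemma id_cod [simp]: "a \<in> Obj C \<Longrightarrow> Cod C (Id C a) = a" using id_props by blast
lemma id_left [simp]: "f \<in> Mor C \<Longrightarrow> Cod C f = b \<Longrightarrow> Id C b \<cdot> f = f"
  using cat unfolding is_category_def by blast
lemma id_right [simp]: "f \<in> Mor C \<Longrightarrow> Dom C f = a \<Longrightarrow> f \<cdot> Id C a = f"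
  using cat unfolding is_category_def by blast


lemma ax_iso: "\<forall>f. iso C f \<longrightarrow> f \<in> Cof C \<and> f \<in> WE C"
  by (insert cc, unfold cylinder_category_def, elim conjE, assumption)
lemma ax_cofc: "\<forall>f\<in>Cof C. \<forall>g\<in>Cof C. Cod C f = Dom C g \<longrightarrow> Comp C g f \<in> Cof C"
  by (insert cc, unfold cylinder_category_def, elim conjE, assumption)
lemma ax_wec: "\<forall>f\<in>WE C. \<forall>g\<in>WE C. Cod C f = Dom C g \<longrightarrow> Comp C g f \<in> WE C"
  by (insert cc, unfold cylinder_category_def, elim conjE, assumption)
lemma ax_26: "\<forall>f\<in>Mor C. \<forall>g\<in>Mor C. \<forall>h\<in>Mor C. Cod C h = Dom C g \<longrightarrow> Cod C g = Dom C f \<longrightarrow>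
        Comp C f g \<in> WE C \<longrightarrow> Comp C g h \<in> WE C \<longrightarrow>
        f \<in> WE C \<and> g \<in> WE C \<and> h \<in> WE C \<and> Comp C f (Comp C g h) \<in> WE C"
  by (insert cc, unfold cylinder_category_def, elim conjE, assumption)
lemma ax_init: "\<exists>z. initial C z"
  by (insert cc, unfold cylinder_category_def, elim conjE, assumption)
lemma ax_initcof: "\<forall>z. initial C z \<longrightarrow> (\<forall>x\<in>Obj C. hom C z x \<subseteq> Cof C)"
  by (insert cc, unfold cylinder_category_def, elim conjE, assumption)
lemma ax_po: "\<forall>f\<in>Cof C. \<forall>g\<in>Mor C. Dom C g = Dom C f \<longrightarrow>
        (\<exists>p q. is_pushout C f g p q) \<and> (\<forall>p q. is_pushout C f g p q \<longrightarrow> q \<in> Cof C)"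
  by (insert cc, unfold cylinder_category_def, elim conjE, assumption)
lemma ax_tpo: "\<forall>f\<in>Cof C \<inter> WE C. \<forall>g p q. is_pushout C f g p q \<longrightarrow> q \<in> Cof C \<inter> WE C"
  by (insert cc, unfold cylinder_category_def, elim conjE, assumption)
lemma ax_cyl: "\<forall>x\<in>Obj C. \<forall>z e p q. initial C z \<longrightarrow> e \<in> hom C z x \<longrightarrow> is_pushout C e e p q \<longrightarrow>
        (\<exists>j r. j \<in> Cof C \<and> r \<in> WE C \<and>
           j \<in> hom C (Cod C p) (Cod C j) \<and> r \<in> hom C (Cod C j) x \<and>
           Comp C r (Comp C j p) = Id C x \<and> Comp C r (Comp C j q) = Id C x)"
  by (insert cc, unfold cylinder_category_def, elim conjE, assumption)
lemma ax_ret: "\<forall>f\<in>Cof C \<inter> WE C. \<exists>r\<in>hom C (Cod C f) (Dom C f). Comp C r f = Id C (Dom C f)"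
  by (insert cc, unfold cylinder_category_def, elim conjE, assumption)


lemma cof_sub: "Cof C \<subseteq> Mor C" and we_sub: "WE C \<subseteq> Mor C"
  using cc unfolding cylinder_category_def by auto
lemma cof_mor [simp]: "f \<in> Cof C \<Longrightarrow> f \<in> Mor C"
  using cof_sub by blast
lemma we_mor [simp]: "f \<in> WE C \<Longrightarrow> f \<in> Mor C"
  using we_sub by blast

lemma iso_we: "iso C f \<Longrightarrow> f \<in> WE C"
  using ax_iso by blast
lemma iso_cof: "iso C f \<Longrightarrow> f \<in> Cof C"
  using ax_iso by blast

lemma id_iso: "a \<in> Obj C \<Longrightarrow> iso C (Id C a)"
  unfolding iso_def hom_def by (rule conjI, simp, rule bexI[of _ "Id C a"]) auto

lemma id_we [simp]: "a \<in> Obj C \<Longrightarrow> Id C a \<in> WE C" using id_iso iso_we by blast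

lemma cof_comp [simp]: "f \<in> Cof C \<Longrightarrow> g \<in> Cof C \<Longrightarrow> Cod C f = Dom C g \<Longrightarrow> g \<cdot> f \<in> Cof C"
  using ax_cofc by blast
lemma we_comp [simp]: "f \<in> WE C \<Longrightarrow> g \<in> WE C \<Longrightarrow> Cod C f = Dom C g \<Longrightarrow> g \<cdot> f \<in> WE C"
  using ax_wec by blast

lemma two_six:
  assumes "f \<in> Mor C" "g \<in> Mor C" "h \<in> Mor C" "Cod C h = Dom C g" "Cod C g = Dom C f"
    "f \<cdot> g \<in> WE C" "g \<cdot> h \<in> WE C"
  shows "f \<in> WE C \<and> g \<in> WE C \<and> h \<in> WE C"
  using ax_26 assms by blast

lemma we_cancel_l:
  assumes "f \<in> Mor C" "g \<in> WE C" "Cod C f = Dom C g" "g \<cdot> f \<in> WE C"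
  shows "f \<in> WE C"
  using two_six[of "Id C (Cod C g)" g f] assms by simp

lemma we_cancel_r:
  assumes "f \<in> WE C" "g \<in> Mor C" "Cod C f = Dom C g" "g \<cdot> f \<in> WE C"
  shows "g \<in> WE C"
  using two_six[of g f "Id C (Dom C f)"] assms by simp

lemma section_we:
  assumes "f \<in> Mor C" "r \<in> WE C" "Cod C f = Dom C r" "r \<cdot> f = Id C (Dom C f)"
  shows "f \<in> WE C"
  using we_cancel_l[OF assms(1-3)] assms(4) assms(1) by simp

lemma retraction_we:
  assumes "f \<in> WE C" "r \<in> Mor C" "Cod C f = Dom C r" "r \<cdot> f = Id C (Dom C f)"
  shows "r \<in> WE C"
  using we_cancel_r[OF assms(1-3)] assms(4) assms(1) by simp


section \<open>Pushouts\<close>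

lemma po_props:
  assumes "is_pushout C f g p q"
  shows "f \<in> Mor C" "g \<in> Mor C" "p \<in> Mor C" "q \<in> Mor C" "Dom C g = Dom C f"
    "Dom C p = Cod C f" "Dom C q = Cod C g" "Cod C q = Cod C p" "p \<cdot> f = q \<cdot> g"
  using assms unfolding is_pushout_def hom_def by auto

lemma po_univ:
  assumes "is_pushout C f g p q"
  shows "\<forall>e\<in>Obj C. \<forall>u\<in>hom C (Cod C f) e. \<forall>v\<in>hom C (Cod C g) e.
        u \<cdot> f = v \<cdot> g \<longrightarrow> (\<exists>!k. k \<in> hom C (Cod C p) e \<and> k \<cdot> p = u \<and> k \<cdot> q = v)"
  using assms unfolding is_pushout_def by blast

lemma po_map:
  assumes "is_pushout C f g p q" "u \<in> Mor C" "v \<in> Mor C" "Dom C u = Cod C f" "Dom C v = Cod C g"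
    "Cod C v = Cod C u" "u \<cdot> f = v \<cdot> g"
  obtains k where "k \<in> Mor C" "Dom C k = Cod C p" "Cod C k = Cod C u" "k \<cdot> p = u" "k \<cdot> q = v"
proof -
  have "\<exists>!k. k \<in> hom C (Cod C p) (Cod C u) \<and> k \<cdot> p = u \<and> k \<cdot> q = v"
    using po_univ[OF assms(1), rule_format, of "Cod C u" u v] assms by (simp add: hom_def)
  then show ?thesis using that unfolding hom_def by blast
qed

lemma po_uniq:
  assumes "is_pushout C f g p q" "k \<in> Mor C" "k' \<in> Mor C" "Dom C k = Cod C p" "Dom C k' = Cod C p"
    "Cod C k' = Cod C k" "k \<cdot> p = k' \<cdot> p" "k \<cdot> q = k' \<cdot> q"
  shows "k = k'"
proof -
  note P = po_props[OF assms(1)]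
  have "(k \<cdot> p) \<cdot> f = k \<cdot> (p \<cdot> f)" using P(1-8) assms(2,4) by simp
  also have "\<dots> = k \<cdot> (q \<cdot> g)" using P(9) by simp
  also have "\<dots> = (k \<cdot> q) \<cdot> g" using P(1-8) assms(2,4) by simp
  finally have "(k \<cdot> p) \<cdot> f = (k \<cdot> q) \<cdot> g" .
  then have "\<exists>!h. h \<in> hom C (Cod C p) (Cod C k) \<and> h \<cdot> p = k \<cdot> p \<and> h \<cdot> q = k \<cdot> q"
    using po_univ[OF assms(1), rule_format, of "Cod C k" "k \<cdot> p" "k \<cdot> q"] assms(2,4) P by (simp add: hom_def)
  then obtain h where h: "\<And>y. y \<in> hom C (Cod C p) (Cod C k) \<and> y \<cdot> p = k \<cdot> p \<and> y \<cdot> q = k \<cdot> q \<Longrightarrow> y = h"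
    by (metis (no_types, lifting))
  have "k = h" by (rule h) (use assms(2,4) in \<open>simp add: hom_def\<close>)
  moreover have "k' = h" by (rule h) (use assms(3,5,6,7,8) in \<open>simp add: hom_def\<close>)
  ultimately show ?thesis by simp
qed

lemma po_sym:
  assumes "is_pushout C f g p q"
  shows "is_pushout C g f q p"
proof -
  note P = po_props[OF assms]
  have U: "\<forall>e\<in>Obj C. \<forall>u\<in>hom C (Cod C g) e. \<forall>v\<in>hom C (Cod C f) e.
        u \<cdot> g = v \<cdot> f \<longrightarrow> (\<exists>!k. k \<in> hom C (Cod C q) e \<and> k \<cdot> q = u \<and> k \<cdot> p = v)"
  proof (intro ballI impI)
    fix e u v assume h: "e \<in> Obj C" "u \<in> hom C (Cod C g) e" "v \<in> hom C (Cod C f) e" "u \<cdot> g = v \<cdot> f"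
    have "\<exists>!k. k \<in> hom C (Cod C p) e \<and> k \<cdot> p = v \<and> k \<cdot> q = u"
      using po_univ[OF assms, rule_format, of e v u] h by simp
    then show "\<exists>!k. k \<in> hom C (Cod C q) e \<and> k \<cdot> q = u \<and> k \<cdot> p = v" using P by auto
  qed
  show ?thesis unfolding is_pushout_def using P U by (auto simp: hom_def)
qed

lemma po_ex:
  assumes "f \<in> Cof C" "g \<in> Mor C" "Dom C g = Dom C f"
  obtains p q where "is_pushout C f g p q"
proof -
  have "(\<exists>p q. is_pushout C f g p q)" using ax_po[rule_format, OF assms] by blast
  then show ?thesis using that by blast
qed

lemma po_cof: "f \<in> Cof C \<Longrightarrow> is_pushout C f g p q \<Longrightarrow> q \<in> Cof C"
proof -
  assume a: "f \<in> Cof C" "is_pushout C f g p q"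
  have "g \<in> Mor C" "Dom C g = Dom C f" using po_props[OF a(2)] by auto
  then have "(\<forall>p q. is_pushout C f g p q \<longrightarrow> q \<in> Cof C)"
    using ax_po[rule_format, OF a(1) \<open>g \<in> Mor C\<close> \<open>Dom C g = Dom C f\<close>] by blast
  then show ?thesis using a(2) by blast
qed

lemma po_cof2: "g \<in> Cof C \<Longrightarrow> is_pushout C f g p q \<Longrightarrow> p \<in> Cof C"
  using po_cof po_sym by blast

lemma po_we: "f \<in> Cof C \<Longrightarrow> f \<in> WE C \<Longrightarrow> is_pushout C f g p q \<Longrightarrow> q \<in> WE C"
  using ax_tpo[rule_format, of f g p q] by blast

lemma po_we2: "g \<in> Cof C \<Longrightarrow> g \<in> WE C \<Longrightarrow> is_pushout C f g p q \<Longrightarrow> p \<in> WE C"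
  using po_we po_sym by blast

lemma retr:
  assumes "t \<in> Cof C" "t \<in> WE C"
  obtains r where "r \<in> Mor C" "Dom C r = Cod C t" "Cod C r = Dom C t" "r \<cdot> t = Id C (Dom C t)"
proof -
  have "\<exists>r\<in>hom C (Cod C t) (Dom C t). r \<cdot> t = Id C (Dom C t)" using ax_ret assms by blast
  then show ?thesis using that unfolding hom_def by blast
qed

definition z0 where "z0 = (SOME z. initial C z)"
lemma z0_init: "initial C z0"
  unfolding z0_def using ax_init by (rule someI_ex)

lemma z0_obj [simp]: "z0 \<in> Obj C" using z0_init unfolding initial_def by blast

definition ini where "ini a = (THE f. f \<in> hom C z0 a)"

lemma ini_hom: "a \<in> Obj C \<Longrightarrow> ini a \<in> hom C z0 a"
  unfolding ini_def using z0_init unfolding initial_def by (metis theI')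

lemma ini_mor [simp]: "a \<in> Obj C \<Longrightarrow> ini a \<in> Mor C"
  and ini_dom [simp]: "a \<in> Obj C \<Longrightarrow> Dom C (ini a) = z0"
  and ini_cod [simp]: "a \<in> Obj C \<Longrightarrow> Cod C (ini a) = a"
  using ini_hom unfolding hom_def by auto

lemma ini_uniq: "f \<in> Mor C \<Longrightarrow> Dom C f = z0 \<Longrightarrow> f = ini (Cod C f)"
proof -
  assume a: "f \<in> Mor C" "Dom C f = z0"
  have u: "\<exists>!g. g \<in> hom C z0 (Cod C f)" using z0_init a(1) unfolding initial_def by simp
  have "f \<in> hom C z0 (Cod C f)" using a unfolding hom_def by simp
  moreover have "ini (Cod C f) \<in> hom C z0 (Cod C f)" using ini_hom a by simp
  ultimately show ?thesis using u by metis
qed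

lemma ini_cof [simp]: "a \<in> Obj C \<Longrightarrow> ini a \<in> Cof C"
  using ax_initcof z0_init ini_hom by blast

lemma ini_eq: "f \<in> Mor C \<Longrightarrow> g \<in> Mor C \<Longrightarrow> Dom C f = z0 \<Longrightarrow> Dom C g = z0 \<Longrightarrow> Cod C f = Cod C g \<Longrightarrow> f = g"
  using ini_uniq by metis

lemma copo_ex:
  assumes "a \<in> Obj C" "b \<in> Obj C"
  obtains p q where "is_pushout C (ini a) (ini b) p q"
  using po_ex[of "ini a" "ini b"] assms by auto

lemma copo_map:
  assumes "is_pushout C (ini a) (ini b) p q" "a \<in> Obj C" "b \<in> Obj C"
    "u \<in> Mor C" "v \<in> Mor C" "Dom C u = a" "Dom C v = b" "Cod C v = Cod C u"
  obtains k where "k \<in> Mor C" "Dom C k = Cod C p" "Cod C k = Cod C u" "k \<cdot> p = u" "k \<cdot> q = v"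
proof -
  have "u \<cdot> ini a = v \<cdot> ini b" using assms by (intro ini_eq) auto
  then show ?thesis using po_map[OF assms(1), of u v] assms that by auto
qed

section \<open>Presheaves\<close>

lemma psax1: "is_presheaf C F \<Longrightarrow> \<forall>f\<in>Mor C. \<forall>x\<in>PS F (Cod C f). PM F f x \<in> PS F (Dom C f)"
  by (unfold is_presheaf_def, elim conjE, assumption)
lemma psax2: "is_presheaf C F \<Longrightarrow> \<forall>a\<in>Obj C. \<forall>x\<in>PS F a. PM F (Id C a) x = x"
  by (unfold is_presheaf_def, elim conjE, assumption)
lemma psax3: "is_presheaf C F \<Longrightarrow> \<forall>f\<in>Mor C. \<forall>g\<in>Mor C. Cod C f = Dom C g \<longrightarrow>
        (\<forall>x\<in>PS F (Cod C g). PM F (Comp C g f) x = PM F f (PM F g x))"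
  by (unfold is_presheaf_def, elim conjE, assumption)
lemma psax4: "is_presheaf C F \<Longrightarrow> \<forall>z. initial C z \<longrightarrow> (\<exists>v. PS F z = {v})"
  by (unfold is_presheaf_def, elim conjE, assumption)
lemma psax5: "is_presheaf C F \<Longrightarrow> \<forall>f\<in>Cof C. \<forall>g p q. is_pushout C f g p q \<longrightarrow>
        bij_betw (\<lambda>x. (PM F p x, PM F q x)) (PS F (Cod C p))
          {(y, w). y \<in> PS F (Cod C f) \<and> w \<in> PS F (Cod C g) \<and> PM F f y = PM F g w}"
  by (unfold is_presheaf_def, elim conjE, assumption)

lemma ps_map [simp]: "is_presheaf C F \<Longrightarrow> f \<in> Mor C \<Longrightarrow> Dom C f = a \<Longrightarrow> x \<in> PS F (Cod C f) \<Longrightarrow> PM F f x \<in> PS F a"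
  using psax1 by blast

lemma ps_comp [simp]: "is_presheaf C F \<Longrightarrow> f \<in> Mor C \<Longrightarrow> g \<in> Mor C \<Longrightarrow> Cod C f = Dom C g \<Longrightarrow> x \<in> PS F (Cod C g) \<Longrightarrow>
   PM F (g \<cdot> f) x = PM F f (PM F g x)"
  using psax3 by blast

lemma ps_id [simp]: "is_presheaf C F \<Longrightarrow> a \<in> Obj C \<Longrightarrow> x \<in> PS F a \<Longrightarrow> PM F (Id C a) x = x"
  using psax2 by blast

lemma ps_ini: "is_presheaf C F \<Longrightarrow> \<exists>v. PS F z0 = {v}"
  using z0_init psax4 by blast

lemma ps_glue:
  assumes "is_presheaf C F" "is_pushout C c g p q" "c \<in> Cof C" "y \<in> PS F (Cod C c)" "w \<in> PS F (Cod C g)"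
    "PM F c y = PM F g w"
  obtains x where "x \<in> PS F (Cod C p)" "PM F p x = y" "PM F q x = w"
proof -
  have "bij_betw (\<lambda>x. (PM F p x, PM F q x)) (PS F (Cod C p))
          {(y, w). y \<in> PS F (Cod C c) \<and> w \<in> PS F (Cod C g) \<and> PM F c y = PM F g w}"
    using psax5[OF assms(1)] assms(2,3) by blast
  then have "(y, w) \<in> (\<lambda>x. (PM F p x, PM F q x)) ` PS F (Cod C p)"
    using assms(4-6) unfolding bij_betw_def by auto
  then show ?thesis using that by auto
qed

lemma ps_glue_uniq:
  assumes "is_presheaf C F" "is_pushout C c g p q" "c \<in> Cof C" "x \<in> PS F (Cod C p)" "x' \<in> PS F (Cod C p)"
    "PM F p x = PM F p x'" "PM F q x = PM F q x'"
  shows "x = x'"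
proof -
  have "bij_betw (\<lambda>x. (PM F p x, PM F q x)) (PS F (Cod C p))
          {(y, w). y \<in> PS F (Cod C c) \<and> w \<in> PS F (Cod C g) \<and> PM F c y = PM F g w}"
    using psax5[OF assms(1)] assms(2,3) by blast
  then have "inj_on (\<lambda>x. (PM F p x, PM F q x)) (PS F (Cod C p))" unfolding bij_betw_def by blast
  then show ?thesis using assms(4-7) unfolding inj_on_def by auto
qed

lemma ps_ext:
  assumes "is_presheaf C F" "t \<in> Cof C" "t \<in> WE C" "y \<in> PS F (Dom C t)"
  obtains x where "x \<in> PS F (Cod C t)" "PM F t x = y"
proof -
  obtain r where r: "r \<in> Mor C" "Dom C r = Cod C t" "Cod C r = Dom C t" "r \<cdot> t = Id C (Dom C t)"
    using retr assms(2,3) by blast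
  have "PM F (r \<cdot> t) y = PM F t (PM F r y)" by (rule ps_comp) (use assms r in auto)
  then have "PM F t (PM F r y) = y" using r assms by simp
  then show ?thesis using that[of "PM F r y"] assms r by simp
qed

lemma pm_in [simp]: "presheaf_mor C F G \<eta> \<Longrightarrow> a \<in> Obj C \<Longrightarrow> x \<in> PS F a \<Longrightarrow> \<eta> a x \<in> PS G a"
  unfolding presheaf_mor_def by blast

lemma pm_nat: "presheaf_mor C F G \<eta> \<Longrightarrow> f \<in> Mor C \<Longrightarrow> x \<in> PS F (Cod C f) \<Longrightarrow>
   \<eta> (Dom C f) (PM F f x) = PM G f (\<eta> (Cod C f) x)"
  unfolding presheaf_mor_def by blast


lemma cong2:
  assumes "a \<cdot> b = c \<cdot> d" "a \<in> Mor C" "b \<in> Mor C" "c \<in> Mor C" "d \<in> Mor C" "x \<in> Mor C"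
    "Cod C b = Dom C a" "Cod C d = Dom C c" "Cod C x = Dom C b" "Cod C x = Dom C d"
  shows "a \<cdot> (b \<cdot> x) = c \<cdot> (d \<cdot> x)"
proof -
  have "a \<cdot> (b \<cdot> x) = (a \<cdot> b) \<cdot> x" using assms(2-) by simp
  also have "\<dots> = (c \<cdot> d) \<cdot> x" using assms(1) by simp
  also have "\<dots> = c \<cdot> (d \<cdot> x)" using assms(2-) by simp
  finally show ?thesis .
qed

lemma cong1:
  assumes "a \<cdot> b = c" "a \<in> Mor C" "b \<in> Mor C" "x \<in> Mor C" "Cod C b = Dom C a" "Cod C x = Dom C b"
  shows "a \<cdot> (b \<cdot> x) = c \<cdot> x"
proof -
  have "a \<cdot> (b \<cdot> x) = (a \<cdot> b) \<cdot> x" using assms(2-) by simp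
  then show ?thesis using assms(1) by simp
qed

section \<open>Factorization\<close>

lemma fact:
  assumes phi: "\<phi> \<in> Mor C"
  obtains \<kappa> \<pi> where "\<kappa> \<in> Cof C" "Dom C \<kappa> = Dom C \<phi>" "\<pi> \<in> WE C" "Dom C \<pi> = Cod C \<kappa>"
    "Cod C \<pi> = Cod C \<phi>" "\<pi> \<cdot> \<kappa> = \<phi>"
proof -
  define S T where "S = Dom C \<phi>" and "T = Cod C \<phi>"
  have S: "S \<in> Obj C" and T: "T \<in> Obj C" using phi by (auto simp: S_def T_def)
  obtain P Q where PQ: "is_pushout C (ini S) (ini S) P Q" using copo_ex S by blast
  note PQp = po_props[OF PQ]
  have PQd: "Dom C P = S" "Dom C Q = S" "Cod C Q = Cod C P" using PQp S by auto
  have Qcof: "Q \<in> Cof C" using po_cof[OF ini_cof[OF S] PQ] .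
  obtain j r where jr: "j \<in> Cof C" "r \<in> WE C" "j \<in> hom C (Cod C P) (Cod C j)" "r \<in> hom C (Cod C j) S"
      "r \<cdot> (j \<cdot> P) = Id C S" "r \<cdot> (j \<cdot> Q) = Id C S"
    using ax_cyl[rule_format, OF S z0_init ini_hom[OF S] PQ] by blast
  have jd: "j \<in> Mor C" "Dom C j = Cod C P" "r \<in> Mor C" "Dom C r = Cod C j" "Cod C r = S"
    using jr unfolding hom_def by auto
  obtain p' q' where pq: "is_pushout C (ini S) (ini T) p' q'" using copo_ex S T by blast
  note pqp = po_props[OF pq]
  have pqd: "Dom C p' = S" "Dom C q' = T" "Cod C q' = Cod C p'" using pqp S T by auto
  have p'cof: "p' \<in> Cof C" using po_cof2[OF ini_cof[OF T] pq] .
  obtain \<sigma> where sg: "\<sigma> \<in> Mor C" "Dom C \<sigma> = Cod C P" "Cod C \<sigma> = Cod C p'" "\<sigma> \<cdot> P = p'" "\<sigma> \<cdot> Q = q' \<cdot> \<phi>"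
    using copo_map[OF PQ S S, of p' "q' \<cdot> \<phi>"] pqp pqd phi S_def T_def PQp by auto
  obtain \<alpha> \<beta> where ab: "is_pushout C j \<sigma> \<alpha> \<beta>" using po_ex[of j \<sigma>] jr(1) jd sg by auto
  note abp = po_props[OF ab]
  have abd: "Dom C \<alpha> = Cod C j" "Dom C \<beta> = Cod C p'" "Cod C \<beta> = Cod C \<alpha>" using abp sg jd by auto
  have bcof: "\<beta> \<in> Cof C" by (rule po_cof[OF jr(1) ab])
  obtain \<tau> where tau: "\<tau> \<in> Mor C" "Dom C \<tau> = Cod C p'" "Cod C \<tau> = T" "\<tau> \<cdot> p' = \<phi>" "\<tau> \<cdot> q' = Id C T"
    using copo_map[OF pq S T, of \<phi> "Id C T"] phi S_def T_def T by auto
  note M1 = jd PQd PQp(1-4) pqd pqp(1-4) sg(1-3) abd abp(1-4) tau(1-3) phi S T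
  have "(\<phi> \<cdot> r) \<cdot> j = \<tau> \<cdot> \<sigma>"
  proof (rule po_uniq[OF PQ])
    have "((\<phi> \<cdot> r) \<cdot> j) \<cdot> P = \<phi> \<cdot> (r \<cdot> (j \<cdot> P))" using M1 by (simp add: S_def T_def)
    also have "\<dots> = \<phi>" using jr(5) phi S_def by simp
    also have "\<dots> = \<tau> \<cdot> (\<sigma> \<cdot> P)" using tau sg by simp
    also have "\<dots> = (\<tau> \<cdot> \<sigma>) \<cdot> P" using M1 by simp
    finally show "((\<phi> \<cdot> r) \<cdot> j) \<cdot> P = (\<tau> \<cdot> \<sigma>) \<cdot> P" .
    have "((\<phi> \<cdot> r) \<cdot> j) \<cdot> Q = \<phi> \<cdot> (r \<cdot> (j \<cdot> Q))" using M1 by (simp add: S_def T_def)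
    also have "\<dots> = \<phi>" using jr(6) phi S_def by simp
    also have "\<dots> = (\<tau> \<cdot> q') \<cdot> \<phi>" using tau phi T_def by simp
    also have "\<dots> = \<tau> \<cdot> (\<sigma> \<cdot> Q)" using M1 sg(5) by (simp add: S_def T_def)
    also have "\<dots> = (\<tau> \<cdot> \<sigma>) \<cdot> Q" using M1 by simp
    finally show "((\<phi> \<cdot> r) \<cdot> j) \<cdot> Q = (\<tau> \<cdot> \<sigma>) \<cdot> Q" .
  qed (use M1 in \<open>simp_all add: S_def T_def\<close>)
  then obtain \<pi> where pi: "\<pi> \<in> Mor C" "Dom C \<pi> = Cod C \<alpha>" "Cod C \<pi> = T" "\<pi> \<cdot> \<alpha> = \<phi> \<cdot> r" "\<pi> \<cdot> \<beta> = \<tau>"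
    using po_map[OF ab, of "\<phi> \<cdot> r" \<tau>] M1 by (auto simp: S_def T_def)
  define t where "t = \<beta> \<cdot> q'"
  have c1: "j \<cdot> Q \<in> Mor C" "\<phi> \<in> Mor C" "Dom C (j \<cdot> Q) = Dom C \<phi>" using M1 by (simp_all add: S_def)
  have c2: "\<alpha> \<in> hom C (Cod C (j \<cdot> Q)) (Cod C \<alpha>)" "t \<in> hom C (Cod C \<phi>) (Cod C \<alpha>)"
      using M1 by (auto simp: hom_def t_def T_def)
  have "\<alpha> \<cdot> (j \<cdot> Q) = \<beta> \<cdot> (\<sigma> \<cdot> Q)"
      by (rule cong2) (use M1 abp(9) in auto)
  also have "\<dots> = t \<cdot> \<phi>" using M1 sg(5) by (simp add: t_def T_def)
  finally have c3: "\<alpha> \<cdot> (j \<cdot> Q) = t \<cdot> \<phi>" .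
  have c4: "\<forall>e\<in>Obj C. \<forall>u\<in>hom C (Cod C (j \<cdot> Q)) e. \<forall>v\<in>hom C (Cod C \<phi>) e.
        u \<cdot> (j \<cdot> Q) = v \<cdot> \<phi> \<longrightarrow> (\<exists>!k. k \<in> hom C (Cod C \<alpha>) e \<and> k \<cdot> \<alpha> = u \<and> k \<cdot> t = v)"
  proof (intro ballI impI)
    fix e u v assume h: "e \<in> Obj C" "u \<in> hom C (Cod C (j \<cdot> Q)) e" "v \<in> hom C (Cod C \<phi>) e"
      "u \<cdot> (j \<cdot> Q) = v \<cdot> \<phi>"
    have hu: "u \<in> Mor C" "Dom C u = Cod C j" "Cod C u = e" "v \<in> Mor C" "Dom C v = T" "Cod C v = e"
      using h M1 by (auto simp: hom_def T_def)
    obtain \<omega> where om: "\<omega> \<in> Mor C" "Dom C \<omega> = Cod C p'" "Cod C \<omega> = e" "\<omega> \<cdot> p' = u \<cdot> (j \<cdot> P)" "\<omega> \<cdot> q' = v"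
      using copo_map[OF pq S T, of "u \<cdot> (j \<cdot> P)" v] hu M1 by auto
    have ujs: "u \<cdot> j = \<omega> \<cdot> \<sigma>"
    proof (rule po_uniq[OF PQ])
      show "(u \<cdot> j) \<cdot> P = (\<omega> \<cdot> \<sigma>) \<cdot> P" using om hu M1 sg(4) by simp
      have "(u \<cdot> j) \<cdot> Q = v \<cdot> \<phi>" using h(4) hu M1 by simp
      also have "\<dots> = (\<omega> \<cdot> q') \<cdot> \<phi>" using om(5) by simp
      also have "\<dots> = (\<omega> \<cdot> \<sigma>) \<cdot> Q" using om(1-3) hu M1 sg(5) by (simp add: T_def)
      finally show "(u \<cdot> j) \<cdot> Q = (\<omega> \<cdot> \<sigma>) \<cdot> Q" .
    qed (use hu om M1 in auto)
    obtain k where k: "k \<in> Mor C" "Dom C k = Cod C \<alpha>" "Cod C k = e" "k \<cdot> \<alpha> = u" "k \<cdot> \<beta> = \<omega>"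
      using po_map[OF ab, of u \<omega>] hu om M1 ujs by auto
    have "k \<cdot> t = (k \<cdot> \<beta>) \<cdot> q'" unfolding t_def using k(1-3) M1 by simp
    also have "\<dots> = v" using k(5) om(5) by simp
    finally have kt: "k \<cdot> t = v" .
    show "\<exists>!k. k \<in> hom C (Cod C \<alpha>) e \<and> k \<cdot> \<alpha> = u \<and> k \<cdot> t = v"
    proof (rule ex1I[of _ k])
      show "k \<in> hom C (Cod C \<alpha>) e \<and> k \<cdot> \<alpha> = u \<and> k \<cdot> t = v" using k kt by (simp add: hom_def)
    next
      fix k1 assume k1: "k1 \<in> hom C (Cod C \<alpha>) e \<and> k1 \<cdot> \<alpha> = u \<and> k1 \<cdot> t = v"
      have k1d: "k1 \<in> Mor C" "Dom C k1 = Cod C \<alpha>" "Cod C k1 = e" using k1 by (auto simp: hom_def)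
      have kb: "k \<cdot> \<beta> \<in> Mor C" "Dom C (k \<cdot> \<beta>) = Cod C p'" "Cod C (k \<cdot> \<beta>) = e"
        using k M1 by auto
      have k1b: "k1 \<cdot> \<beta> \<in> Mor C" "Dom C (k1 \<cdot> \<beta>) = Cod C p'" "Cod C (k1 \<cdot> \<beta>) = e"
        using k1d M1 by auto
      have e1: "(k1 \<cdot> \<beta>) \<cdot> p' = (k \<cdot> \<beta>) \<cdot> p'"
      proof -
        have "(k1 \<cdot> \<beta>) \<cdot> p' = k1 \<cdot> (\<beta> \<cdot> (\<sigma> \<cdot> P))" using k1d M1 sg(4) by simp
        also have "\<dots> = k1 \<cdot> (\<alpha> \<cdot> (j \<cdot> P))"
        proof -
          have "\<alpha> \<cdot> (j \<cdot> P) = \<beta> \<cdot> (\<sigma> \<cdot> P)" by (rule cong2[OF abp(9)]) (use M1 in auto)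
          then show ?thesis by simp
        qed
        also have "\<dots> = (k1 \<cdot> \<alpha>) \<cdot> (j \<cdot> P)" using k1d M1 by simp
        also have "\<dots> = u \<cdot> (j \<cdot> P)" using k1 by simp
        also have "\<dots> = \<omega> \<cdot> p'" using om(4) by simp
        also have "\<dots> = (k \<cdot> \<beta>) \<cdot> p'" using k(5) by simp
        finally show ?thesis .
      qed
      have e2: "(k1 \<cdot> \<beta>) \<cdot> q' = (k \<cdot> \<beta>) \<cdot> q'"
      proof -
        have "(k1 \<cdot> \<beta>) \<cdot> q' = k1 \<cdot> t" unfolding t_def using k1d M1 by simp
        also have "\<dots> = v" using k1 by simp
        also have "\<dots> = k \<cdot> t" using kt by simp
        also have "\<dots> = (k \<cdot> \<beta>) \<cdot> q'" unfolding t_def using k(1-3) M1 by simp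
        finally show ?thesis .
      qed
      have "k1 \<cdot> \<beta> = k \<cdot> \<beta>"
        by (rule po_uniq[OF pq k1b(1) kb(1) _ _ _ e1 e2]) (use k1b kb pqp in auto)
      then show "k1 = k" using po_uniq[OF ab, of k1 k] k1 k1d k by auto
    qed
  qed
  have "is_pushout C (j \<cdot> Q) \<phi> \<alpha> t"
    unfolding is_pushout_def by (intro conjI c1 c2 c3 c4)
  moreover have "j \<cdot> Q \<in> WE C"
    by (rule section_we[of _ r]) (use jr M1 in auto)
  ultimately have tw: "t \<in> WE C" using po_we[of "j \<cdot> Q" \<phi> \<alpha> t] jr(1) Qcof M1 by auto
  have "\<pi> \<cdot> t = Id C T" using pi tau M1 by (simp add: t_def cong1[OF pi(5)])
  then have "\<pi> \<in> WE C" using retraction_we[OF tw, of \<pi>] pi M1 by (simp add: t_def)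
  moreover have "\<beta> \<cdot> p' \<in> Cof C" using bcof p'cof M1 by simp
  moreover have "\<pi> \<cdot> (\<beta> \<cdot> p') = \<phi>" using pi tau M1 by (simp del: assoc add: assoc[symmetric])
  ultimately show ?thesis using that[of "\<beta> \<cdot> p'" \<pi>] pi M1 by (simp add: S_def T_def)
qed


lemma rc_props:
  assumes "rel_cylinder C i p q j r"
  shows "is_pushout C i i p q" "j \<in> Cof C" "r \<in> WE C" "j \<in> Mor C" "Dom C j = Cod C p"
    "r \<in> Mor C" "Dom C r = Cod C j" "Cod C r = Cod C i"
    "r \<cdot> (j \<cdot> p) = Id C (Cod C i)" "r \<cdot> (j \<cdot> q) = Id C (Cod C i)"
  using assms unfolding rel_cylinder_def hom_def by auto

lemma gen:
  assumes Z: "is_presheaf C Z" and PQ: "is_pushout C i i P Q"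
    and e: "\<epsilon> \<in> Mor C" "Dom C \<epsilon> = Cod C P" and rho: "\<rho> \<in> WE C" "Dom C \<rho> = Cod C \<epsilon>" "Cod C \<rho> = Cod C i"
    "\<rho> \<cdot> (\<epsilon> \<cdot> P) = Id C (Cod C i)" "\<rho> \<cdot> (\<epsilon> \<cdot> Q) = Id C (Cod C i)"
    and h: "h \<in> PS Z (Cod C \<epsilon>)"
  shows "\<exists>j r h'. rel_cylinder C i P Q j r \<and> h' \<in> PS Z (Cod C j) \<and>
    PM Z (j \<cdot> P) h' = PM Z (\<epsilon> \<cdot> P) h \<and> PM Z (j \<cdot> Q) h' = PM Z (\<epsilon> \<cdot> Q) h"
proof -
  note PQp = po_props[OF PQ]
  obtain \<kappa> \<pi> where kp: "\<kappa> \<in> Cof C" "Dom C \<kappa> = Dom C \<epsilon>" "\<pi> \<in> WE C" "Dom C \<pi> = Cod C \<kappa>"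
    "Cod C \<pi> = Cod C \<epsilon>" "\<pi> \<cdot> \<kappa> = \<epsilon>"
    using fact[OF e(1)] by blast
  have km: "\<kappa> \<in> Mor C" "\<pi> \<in> Mor C" "\<rho> \<in> Mor C" using kp rho by auto
  have rw: "\<rho> \<cdot> \<pi> \<in> WE C" using kp rho by simp
  have c1: "(\<rho> \<cdot> \<pi>) \<cdot> (\<kappa> \<cdot> P) = \<rho> \<cdot> (\<epsilon> \<cdot> P)"
  proof -
    have "(\<rho> \<cdot> \<pi>) \<cdot> (\<kappa> \<cdot> P) = \<rho> \<cdot> ((\<pi> \<cdot> \<kappa>) \<cdot> P)" using km kp(2,4,5) rho(2) e PQp by simp
    then show ?thesis using kp(6) by simp
  qed
  have c2: "(\<rho> \<cdot> \<pi>) \<cdot> (\<kappa> \<cdot> Q) = \<rho> \<cdot> (\<epsilon> \<cdot> Q)"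
  proof -
    have "(\<rho> \<cdot> \<pi>) \<cdot> (\<kappa> \<cdot> Q) = \<rho> \<cdot> ((\<pi> \<cdot> \<kappa>) \<cdot> Q)" using km kp(2,4,5) rho(2) e PQp by simp
    then show ?thesis using kp(6) by simp
  qed
  have rc: "rel_cylinder C i P Q \<kappa> (\<rho> \<cdot> \<pi>)"
    unfolding rel_cylinder_def hom_def using PQ kp rw km rho e c1 c2 by auto
  have hp: "PM Z \<pi> h \<in> PS Z (Cod C \<kappa>)" using Z km kp h by simp
  have d1: "PM Z (\<kappa> \<cdot> P) (PM Z \<pi> h) = PM Z (\<epsilon> \<cdot> P) h"
  proof -
    have "PM Z (\<epsilon> \<cdot> P) h = PM Z ((\<pi> \<cdot> \<kappa>) \<cdot> P) h" using kp(6) by simp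
    also have "\<dots> = PM Z (\<kappa> \<cdot> P) (PM Z \<pi> h)" using Z km kp(2,4,5) e PQp h by simp
    finally show ?thesis by simp
  qed
  have d2: "PM Z (\<kappa> \<cdot> Q) (PM Z \<pi> h) = PM Z (\<epsilon> \<cdot> Q) h"
  proof -
    have "PM Z (\<epsilon> \<cdot> Q) h = PM Z ((\<pi> \<cdot> \<kappa>) \<cdot> Q) h" using kp(6) by simp
    also have "\<dots> = PM Z (\<kappa> \<cdot> Q) (PM Z \<pi> h)" using Z km kp(2,4,5) e PQp h by simp
    finally show ?thesis by simp
  qed
  show ?thesis using rc hp d1 d2 by blast
qed


lemma case3:
  assumes X: "is_presheaf C X" and Y: "is_presheaf C Y" and Z: "is_presheaf C Z"
    and f: "presheaf_mor C X Y f" and g: "presheaf_mor C Y Z g"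
    and wg: "ps_weq C Y Z g" and wgf: "ps_weq C X Z (ps_comp g f)"
  shows "ps_weq C X Y f"
  unfolding ps_weq_def
proof (intro ballI impI)
  fix i u w assume i: "i \<in> Cof C" and u: "u \<in> PS X (Dom C i)" and w: "w \<in> PS Y (Cod C i)"
    and e: "f (Dom C i) u = PM Y i w"
  have im: "i \<in> Mor C" using i by simp
  have gw: "g (Cod C i) w \<in> PS Z (Cod C i)" using g w im by simp
  have "ps_comp g f (Dom C i) u = g (Dom C i) (PM Y i w)" using e by (simp add: ps_comp_def)
  also have "\<dots> = PM Z i (g (Cod C i) w)" using pm_nat[OF g im w] .
  finally have e2: "ps_comp g f (Dom C i) u = PM Z i (g (Cod C i) w)" .
  obtain a where a: "a \<in> PS X (Cod C i)" "PM X i a = u" and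
    "\<exists>p q j r h. rel_cylinder C i p q j r \<and> h \<in> PS Z (Cod C j) \<and>
              PM Z (Comp C j p) h = ps_comp g f (Cod C i) a \<and> PM Z (Comp C j q) h = g (Cod C i) w"
    using wgf i u gw e2 unfolding ps_weq_def by blast
  then obtain P Q j r h where rc: "rel_cylinder C i P Q j r" and h: "h \<in> PS Z (Cod C j)"
    "PM Z (j \<cdot> P) h = g (Cod C i) (f (Cod C i) a)" "PM Z (j \<cdot> Q) h = g (Cod C i) w"
    by (auto simp: ps_comp_def)
  note R = rc_props[OF rc]
  note PQp = po_props[OF R(1)]
  have fa: "f (Cod C i) a \<in> PS Y (Cod C i)" using f a im by simp
  have "PM Y i (f (Cod C i) a) = f (Dom C i) (PM X i a)" using pm_nat[OF f im a(1)] by simp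
  then have ee: "PM Y i (f (Cod C i) a) = PM Y i w" using a e by simp
  obtain v where v: "v \<in> PS Y (Cod C P)" "PM Y P v = f (Cod C i) a" "PM Y Q v = w"
    using ps_glue[OF Y R(1) i fa w ee] PQp by auto
  have gv: "g (Dom C j) v \<in> PS Z (Dom C j)" using g v R PQp by simp
  have jh: "PM Z j h \<in> PS Z (Dom C j)" using Z R h by simp
  have "g (Dom C j) v = PM Z j h"
  proof (rule ps_glue_uniq[OF Z R(1) i])
    show "g (Dom C j) v \<in> PS Z (Cod C P)" "PM Z j h \<in> PS Z (Cod C P)" using gv jh R by auto
    have "PM Z P (g (Dom C j) v) = g (Dom C P) (PM Y P v)"
      using pm_nat[OF g PQp(3), of v] v R by simp
    also have "\<dots> = g (Cod C i) (f (Cod C i) a)" using v PQp by simp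
    also have "\<dots> = PM Z P (PM Z j h)" using h Z R PQp by simp
    finally show "PM Z P (g (Dom C j) v) = PM Z P (PM Z j h)" .
    have "PM Z Q (g (Dom C j) v) = g (Dom C Q) (PM Y Q v)"
      using pm_nat[OF g PQp(4), of v] v R PQp by simp
    also have "\<dots> = g (Cod C i) w" using v PQp by simp
    also have "\<dots> = PM Z Q (PM Z j h)" using h Z R PQp by simp
    finally show "PM Z Q (g (Dom C j) v) = PM Z Q (PM Z j h)" .
  qed
  moreover have v': "v \<in> PS Y (Dom C j)" using v R by simp
  ultimately obtain K where K: "K \<in> PS Y (Cod C j)" "PM Y j K = v"
    using wg[unfolded ps_weq_def, rule_format, OF R(2) v' h(1)] by blast
  have K1: "PM Y (j \<cdot> P) K = f (Cod C i) a" using Y K R PQp v by simp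
  have K2: "PM Y (j \<cdot> Q) K = w" using Y K R PQp v by simp
  show "\<exists>a\<in>PS X (Cod C i). PM X i a = u \<and>
           (\<exists>p q j r h. rel_cylinder C i p q j r \<and> h \<in> PS Y (Cod C j) \<and>
              PM Y (Comp C j p) h = f (Cod C i) a \<and> PM Y (Comp C j q) h = w)"
    using a rc K(1) K1 K2 by blast
qed


lemma case1:
  assumes X: "is_presheaf C X" and Y: "is_presheaf C Y" and Z: "is_presheaf C Z"
    and f: "presheaf_mor C X Y f" and g: "presheaf_mor C Y Z g"
    and wf: "ps_weq C X Y f" and wg: "ps_weq C Y Z g"
  shows "ps_weq C X Z (ps_comp g f)"
  unfolding ps_weq_def
proof (intro ballI impI)
  fix i u w assume i: "i \<in> Cof C" and u: "u \<in> PS X (Dom C i)" and w: "w \<in> PS Z (Cod C i)"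
    and e: "ps_comp g f (Dom C i) u = PM Z i w"
  have im: "i \<in> Mor C" using i by simp
  have fu: "f (Dom C i) u \<in> PS Y (Dom C i)" using f u im by simp
  have e1: "g (Dom C i) (f (Dom C i) u) = PM Z i w" using e by (simp add: ps_comp_def)
  obtain b where b: "b \<in> PS Y (Cod C i)" "PM Y i b = f (Dom C i) u" and
    "\<exists>p q j r h. rel_cylinder C i p q j r \<and> h \<in> PS Z (Cod C j) \<and>
              PM Z (Comp C j p) h = g (Cod C i) b \<and> PM Z (Comp C j q) h = w"
    using wg[unfolded ps_weq_def, rule_format, OF i fu w e1] by blast
  then obtain P1 Q1 j1 r1 H1 where rc1: "rel_cylinder C i P1 Q1 j1 r1" and H1: "H1 \<in> PS Z (Cod C j1)"
    "PM Z (j1 \<cdot> P1) H1 = g (Cod C i) b" "PM Z (j1 \<cdot> Q1) H1 = w"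
    by blast
  have e2: "f (Dom C i) u = PM Y i b" using b by simp
  obtain a where a: "a \<in> PS X (Cod C i)" "PM X i a = u" and
    "\<exists>p q j r h. rel_cylinder C i p q j r \<and> h \<in> PS Y (Cod C j) \<and>
              PM Y (Comp C j p) h = f (Cod C i) a \<and> PM Y (Comp C j q) h = b"
    using wf[unfolded ps_weq_def, rule_format, OF i u b(1) e2] by blast
  then obtain P2 Q2 j2 r2 H2 where rc2: "rel_cylinder C i P2 Q2 j2 r2" and H2: "H2 \<in> PS Y (Cod C j2)"
    "PM Y (j2 \<cdot> P2) H2 = f (Cod C i) a" "PM Y (j2 \<cdot> Q2) H2 = b"
    by blast
  note R1 = rc_props[OF rc1] and R2 = rc_props[OF rc2]
  note P1p = po_props[OF R1(1)] and P2p = po_props[OF R2(1)]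
  note M = R1(4-8) R2(4-8) P1p(1-8) P2p(1-8)
  define c where "c = j1 \<cdot> P1"
  define d where "d = j2 \<cdot> Q2"
  have cc: "c \<in> Cof C" unfolding c_def using R1(2) po_cof[OF i R1(1)] P1p M by (simp add: po_cof2[OF i R1(1)])
  have cw: "c \<in> WE C" unfolding c_def by (rule section_we[of _ r1]) (use M R1(3,9) in auto)
  have cm: "c \<in> Mor C" "Dom C c = Cod C i" "Cod C c = Cod C j1" using M by (auto simp: c_def)
  have dm: "d \<in> Mor C" "Dom C d = Cod C i" "Cod C d = Cod C j2" using M by (auto simp: d_def)
  obtain \<alpha> \<beta> where ab: "is_pushout C c d \<alpha> \<beta>" using po_ex[OF cc dm(1)] cm dm by auto
  note abp = po_props[OF ab]
  have bw: "\<beta> \<in> WE C" using po_we[OF cc cw ab] .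
  have gH2: "g (Cod C j2) H2 \<in> PS Z (Cod C j2)" using g H2 M by simp
  have "PM Z d (g (Cod C j2) H2) = g (Dom C d) (PM Y d H2)" using pm_nat[OF g dm(1)] H2 dm by simp
  also have "\<dots> = g (Cod C i) b" using H2 dm by (simp add: d_def)
  also have "\<dots> = PM Z c H1" using H1 by (simp add: c_def)
  finally have ee: "PM Z c H1 = PM Z d (g (Cod C j2) H2)" by simp
  obtain hJ where hJ: "hJ \<in> PS Z (Cod C \<alpha>)" "PM Z \<alpha> hJ = H1" "PM Z \<beta> hJ = g (Cod C j2) H2"
    using ps_glue[OF Z ab cc _ _ ee] H1 gH2 cm dm by auto
  have r1c: "r1 \<cdot> c = Id C (Cod C i)" using R1(9) by (simp add: c_def)
  have r2d: "r2 \<cdot> d = Id C (Cod C i)" using R2(10) by (simp add: d_def)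
  obtain \<rho> where rho: "\<rho> \<in> Mor C" "Dom C \<rho> = Cod C \<alpha>" "Cod C \<rho> = Cod C i" "\<rho> \<cdot> \<alpha> = r1" "\<rho> \<cdot> \<beta> = r2"
    using po_map[OF ab, of r1 r2] M cm dm r1c r2d by auto
  have rhow: "\<rho> \<in> WE C" using we_cancel_r[OF bw rho(1)] rho abp R2(3) cm dm by simp
  have ui: "(\<beta> \<cdot> (j2 \<cdot> P2)) \<cdot> i = (\<alpha> \<cdot> (j1 \<cdot> Q1)) \<cdot> i"
  proof -
    have "(\<beta> \<cdot> (j2 \<cdot> P2)) \<cdot> i = \<beta> \<cdot> (j2 \<cdot> (P2 \<cdot> i))" using M abp cm dm im by simp
    also have "\<dots> = \<beta> \<cdot> (j2 \<cdot> (Q2 \<cdot> i))" using P2p(9) by simp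
    also have "\<dots> = (\<beta> \<cdot> d) \<cdot> i" using M abp(1-8) cm dm im by (simp add: d_def)
    also have "\<dots> = (\<alpha> \<cdot> c) \<cdot> i" using abp(9) by simp
    also have "\<dots> = \<alpha> \<cdot> (j1 \<cdot> (P1 \<cdot> i))" using M abp(1-8) cm dm im by (simp add: c_def)
    also have "\<dots> = \<alpha> \<cdot> (j1 \<cdot> (Q1 \<cdot> i))" using P1p(9) by simp
    also have "\<dots> = (\<alpha> \<cdot> (j1 \<cdot> Q1)) \<cdot> i" using M abp cm dm im by simp
    finally show ?thesis .
  qed
  obtain \<epsilon> where eps: "\<epsilon> \<in> Mor C" "Dom C \<epsilon> = Cod C P2" "Cod C \<epsilon> = Cod C \<alpha>"
    "\<epsilon> \<cdot> P2 = \<beta> \<cdot> (j2 \<cdot> P2)" "\<epsilon> \<cdot> Q2 = \<alpha> \<cdot> (j1 \<cdot> Q1)"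
    using po_map[OF R2(1), of "\<beta> \<cdot> (j2 \<cdot> P2)" "\<alpha> \<cdot> (j1 \<cdot> Q1)"] M abp cm dm ui by auto
  have x1: "\<rho> \<cdot> (\<epsilon> \<cdot> P2) = Id C (Cod C i)"
  proof -
    have "\<rho> \<cdot> (\<epsilon> \<cdot> P2) = (\<rho> \<cdot> \<beta>) \<cdot> (j2 \<cdot> P2)" using eps(4) M abp cm dm rho(1,2) by simp
    also have "\<dots> = Id C (Cod C i)" using rho(5) R2(9) by simp
    finally show ?thesis .
  qed
  have x2: "\<rho> \<cdot> (\<epsilon> \<cdot> Q2) = Id C (Cod C i)"
  proof -
    have "\<rho> \<cdot> (\<epsilon> \<cdot> Q2) = (\<rho> \<cdot> \<alpha>) \<cdot> (j1 \<cdot> Q1)" using eps(5) M abp cm dm rho(1,2) by simp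
    also have "\<dots> = Id C (Cod C i)" using rho(4) R1(10) by simp
    finally show ?thesis .
  qed
  have y1: "PM Z (\<epsilon> \<cdot> P2) hJ = ps_comp g f (Cod C i) a"
  proof -
    have "PM Z (\<epsilon> \<cdot> P2) hJ = PM Z (j2 \<cdot> P2) (PM Z \<beta> hJ)" using eps(4) Z M abp cm dm hJ by simp
    also have "\<dots> = PM Z (j2 \<cdot> P2) (g (Cod C j2) H2)" using hJ by simp
    also have "\<dots> = g (Cod C i) (PM Y (j2 \<cdot> P2) H2)" using pm_nat[OF g, of "j2 \<cdot> P2" H2] M H2 by simp
    also have "\<dots> = ps_comp g f (Cod C i) a" using H2 by (simp add: ps_comp_def)
    finally show ?thesis .
  qed
  have y2: "PM Z (\<epsilon> \<cdot> Q2) hJ = w"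
  proof -
    have "PM Z (\<epsilon> \<cdot> Q2) hJ = PM Z (j1 \<cdot> Q1) (PM Z \<alpha> hJ)" using eps(5) Z M abp cm dm hJ by simp
    also have "\<dots> = w" using hJ H1 by simp
    finally show ?thesis .
  qed
  obtain j r h' where "rel_cylinder C i P2 Q2 j r" "h' \<in> PS Z (Cod C j)"
    "PM Z (j \<cdot> P2) h' = PM Z (\<epsilon> \<cdot> P2) hJ" "PM Z (j \<cdot> Q2) h' = PM Z (\<epsilon> \<cdot> Q2) hJ"
  proof -
    have rd: "Dom C \<rho> = Cod C \<epsilon>" using rho eps by simp
    have hJ': "hJ \<in> PS Z (Cod C \<epsilon>)" using hJ eps by simp
    show ?thesis using gen[OF Z R2(1) eps(1,2) rhow rd rho(3) x1 x2 hJ'] that by blast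
  qed
  then show "\<exists>a\<in>PS X (Cod C i). PM X i a = u \<and>
           (\<exists>p q j r h. rel_cylinder C i p q j r \<and> h \<in> PS Z (Cod C j) \<and>
              PM Z (Comp C j p) h = ps_comp g f (Cod C i) a \<and> PM Z (Comp C j q) h = w)"
    using a y1 y2 by metis
qed


end

context cyl
begin

lemma po_mapE:
  assumes "is_pushout C f g p q" "u \<in> Mor C" "v \<in> Mor C" "Dom C u = Cod C f" "Dom C v = Cod C g"
    "Cod C u = E" "Cod C v = E" "u \<cdot> f = v \<cdot> g"
  obtains k where "k \<in> Mor C" "Dom C k = Cod C p" "Cod C k = E" "k \<cdot> p = u" "k \<cdot> q = v"
proof -
  have "Cod C v = Cod C u" using assms(6,7) by simp
  then obtain k where "k \<in> Mor C" "Dom C k = Cod C p" "Cod C k = Cod C u" "k \<cdot> p = u" "k \<cdot> q = v"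
    using po_map[OF assms(1-5) _ assms(8)] by blast
  then show ?thesis using that assms(6) by metis
qed

section \<open>Cylinder over a cofibration\<close>

lemma mcyl:
  assumes i: "i \<in> Cof C" and e: "e \<in> Cof C" "e' \<in> Cof C" "Dom C e = Dom C i" "Dom C e' = Dom C i"
    "Cod C e' = Cod C e"
    and r: "r \<in> WE C" "Dom C r = Cod C e" "Cod C r = Dom C i" "r \<cdot> e = Id C (Dom C i)" "r \<cdot> e' = Id C (Dom C i)"
  obtains l k s t \<pi> where "is_pushout C i e l k"
    "s \<in> Cof C" "s \<in> WE C" "Dom C s = Cod C l"
    "t \<in> Cof C" "t \<in> WE C" "Dom C t = Cod C i" "Cod C t = Cod C s"
    "t \<cdot> i = s \<cdot> (k \<cdot> e')"
    "\<pi> \<in> WE C" "Dom C \<pi> = Cod C s" "Cod C \<pi> = Cod C i"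
    "\<pi> \<cdot> t = Id C (Cod C i)" "\<pi> \<cdot> (s \<cdot> l) = Id C (Cod C i)" "\<pi> \<cdot> (s \<cdot> k) = i \<cdot> r"
proof -
  have im: "i \<in> Mor C" "e \<in> Mor C" "e' \<in> Mor C" "r \<in> Mor C" using i e r by auto
  obtain l k where N: "is_pushout C i e l k" using po_ex[OF i im(2) e(3)] by blast
  note Np = po_props[OF N]
  have kc: "k \<in> Cof C" using po_cof[OF i N] .
  have ew: "e \<in> WE C" by (rule section_we[of _ r]) (use im r e in auto)
  have lc: "l \<in> Cof C" using po_cof2[OF e(1) N] .
  have lw: "l \<in> WE C" using po_we2[OF e(1) ew N] .
  have kec: "k \<cdot> e' \<in> Cof C" using kc e Np by simp
  have ked: "k \<cdot> e' \<in> Mor C" "Dom C (k \<cdot> e') = Dom C i" "Cod C (k \<cdot> e') = Cod C l" using Np im e by auto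
  obtain l2 k2 where M2: "is_pushout C i (k \<cdot> e') l2 k2" using po_ex[OF i ked(1)] ked by blast
  note M2p = po_props[OF M2]
  have l2c: "l2 \<in> Cof C" using po_cof2[OF kec M2] .
  have k2c: "k2 \<in> Cof C" using po_cof[OF i M2] .
  have B: "Cod C i \<in> Obj C" using im by simp
  have ir: "(i \<cdot> r) \<cdot> e = Id C (Cod C i) \<cdot> i"
  proof -
    have "(i \<cdot> r) \<cdot> e = i \<cdot> (r \<cdot> e)" using im r e by simp
    also have "\<dots> = i" using r im by simp
    finally show ?thesis using im by simp
  qed
  obtain \<psi> where psi: "\<psi> \<in> Mor C" "Dom C \<psi> = Cod C l" "Cod C \<psi> = Cod C i" "\<psi> \<cdot> l = Id C (Cod C i)"
      "\<psi> \<cdot> k = i \<cdot> r"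
    using po_map[OF N, of "Id C (Cod C i)" "i \<cdot> r"] im r e B ir[symmetric] by auto
  have ir2: "Id C (Cod C i) \<cdot> i = \<psi> \<cdot> (k \<cdot> e')"
  proof -
    have "\<psi> \<cdot> (k \<cdot> e') = (\<psi> \<cdot> k) \<cdot> e'" using psi(1-3) Np im e by simp
    also have "\<dots> = i \<cdot> (r \<cdot> e')" by (subst psi(5)) (use im r e in simp)
    also have "\<dots> = i" using r im by simp
    finally show ?thesis using im by simp
  qed
  have ex2: "\<exists>\<pi>2. \<pi>2 \<in> Mor C \<and> Dom C \<pi>2 = Cod C l2 \<and> Cod C \<pi>2 = Cod C (Id C (Cod C i)) \<and>
      \<pi>2 \<cdot> l2 = Id C (Cod C i) \<and> \<pi>2 \<cdot> k2 = \<psi>"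
  proof (rule po_map[OF M2, of "Id C (Cod C i)" \<psi>])
    show "Id C (Cod C i) \<in> Mor C" "Dom C (Id C (Cod C i)) = Cod C i" "\<psi> \<in> Mor C"
      using B psi(1) by auto
    show "Dom C \<psi> = Cod C (k \<cdot> e')" using psi(2) ked(3) by simp
    show "Cod C \<psi> = Cod C (Id C (Cod C i))" using psi(3) B by simp
    show "Id C (Cod C i) \<cdot> i = \<psi> \<cdot> (k \<cdot> e')" by (rule ir2)
  qed blast
  then obtain \<pi>2 where pi2: "\<pi>2 \<in> Mor C" "Dom C \<pi>2 = Cod C l2" "Cod C \<pi>2 = Cod C i" "\<pi>2 \<cdot> l2 = Id C (Cod C i)"
      "\<pi>2 \<cdot> k2 = \<psi>"
    using B by auto
  obtain \<kappa> \<pi> where kp: "\<kappa> \<in> Cof C" "Dom C \<kappa> = Dom C \<pi>2" "\<pi> \<in> WE C" "Dom C \<pi> = Cod C \<kappa>"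
    "Cod C \<pi> = Cod C \<pi>2" "\<pi> \<cdot> \<kappa> = \<pi>2"
    using fact[OF pi2(1)] by blast
  have km: "\<kappa> \<in> Mor C" "\<pi> \<in> Mor C" using cof_mor[OF kp(1)] we_mor[OF kp(3)] by - 
  note MM = km kp(2,4,5) pi2(1-3) M2p(1-8) Np(1-8) psi(1-3) im e r ked
  have psw: "\<psi> \<in> WE C" using retraction_we[OF lw psi(1)] psi Np by simp
  define s where "s = \<kappa> \<cdot> k2"
  define t where "t = \<kappa> \<cdot> l2"
  have sc: "s \<in> Cof C" unfolding s_def using kp k2c MM by simp
  have tc: "t \<in> Cof C" unfolding t_def using kp l2c MM by simp
  have sm: "s \<in> Mor C" "Dom C s = Cod C l" "Cod C s = Cod C \<kappa>" using MM by (auto simp: s_def)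
  have tm: "t \<in> Mor C" "Dom C t = Cod C i" "Cod C t = Cod C \<kappa>" using MM by (auto simp: t_def)
  have ps: "\<pi> \<cdot> s = \<psi>"
  proof -
    have "\<pi> \<cdot> s = (\<pi> \<cdot> \<kappa>) \<cdot> k2" unfolding s_def using MM by simp
    then show ?thesis using kp(6) pi2(5) by simp
  qed
  have pt: "\<pi> \<cdot> t = Id C (Cod C i)"
  proof -
    have "\<pi> \<cdot> t = (\<pi> \<cdot> \<kappa>) \<cdot> l2" unfolding t_def using MM by simp
    then show ?thesis using kp(6) pi2(4) by simp
  qed
  have sw: "s \<in> WE C" using we_cancel_l[OF sm(1) kp(3)] ps psw sm kp by simp
  have tw: "t \<in> WE C" by (rule section_we[of _ \<pi>]) (use tm kp pt in auto)
  have ti: "t \<cdot> i = s \<cdot> (k \<cdot> e')"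
  proof -
    have "t \<cdot> i = \<kappa> \<cdot> (l2 \<cdot> i)" unfolding t_def using MM by simp
    also have "\<dots> = \<kappa> \<cdot> (k2 \<cdot> (k \<cdot> e'))" using M2p(9) by simp
    also have "\<dots> = s \<cdot> (k \<cdot> e')" unfolding s_def using MM by simp
    finally show ?thesis .
  qed
  have psl: "\<pi> \<cdot> (s \<cdot> l) = Id C (Cod C i)"
  proof -
    have "\<pi> \<cdot> (s \<cdot> l) = (\<pi> \<cdot> s) \<cdot> l" using MM sm by simp
    then show ?thesis using ps psi(4) by simp
  qed
  have psk: "\<pi> \<cdot> (s \<cdot> k) = i \<cdot> r"
  proof -
    have "\<pi> \<cdot> (s \<cdot> k) = (\<pi> \<cdot> s) \<cdot> k" using MM sm by simp
    then show ?thesis using ps psi(5) by simp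
  qed
  show ?thesis
    by (rule that[OF N sc sw sm(2) tc tw tm(2) _ ti kp(3) _ _ pt psl psk]) (use tm sm kp pi2 in auto)
qed

end

context cyl
begin

lemma case2:
  assumes X: "is_presheaf C X" and Y: "is_presheaf C Y" and Z: "is_presheaf C Z"
    and f: "presheaf_mor C X Y f" and g: "presheaf_mor C Y Z g"
    and wf: "ps_weq C X Y f" and wgf: "ps_weq C X Z (ps_comp g f)"
  shows "ps_weq C Y Z g"
  unfolding ps_weq_def
proof (intro ballI impI)
  fix i u w assume i: "i \<in> Cof C" and u: "u \<in> PS Y (Dom C i)" and w: "w \<in> PS Z (Cod C i)"
    and e: "g (Dom C i) u = PM Z i w"
  have im: "i \<in> Mor C" using i by simp
  have A: "Dom C i \<in> Obj C" and B: "Cod C i \<in> Obj C" using im by auto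
  \<comment> \<open>Step 1: a cylinder on A connecting f x and u\<close>
  define eA where "eA = ini (Dom C i)"
  have eA: "eA \<in> Cof C" "eA \<in> Mor C" "Dom C eA = z0" "Cod C eA = Dom C i" using A by (auto simp: eA_def)
  obtain x0 where x0: "PS X z0 = {x0}" using ps_ini[OF X] by blast
  obtain v0 where v0: "PS Y z0 = {v0}" using ps_ini[OF Y] by blast
  have fx0: "f z0 x0 \<in> PS Y z0" using f x0 by simp
  have pu: "PM Y eA u \<in> PS Y z0" using Y eA u by simp
  have e0: "f (Dom C eA) x0 = PM Y eA u" using fx0 pu v0 eA by simp
  have x0': "x0 \<in> PS X (Dom C eA)" using x0 eA by simp
  have u': "u \<in> PS Y (Cod C eA)" using u eA by simp
  obtain x where x: "x \<in> PS X (Cod C eA)" and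
     "\<exists>p q j r h. rel_cylinder C eA p q j r \<and> h \<in> PS Y (Cod C j) \<and>
        PM Y (j \<cdot> p) h = f (Cod C eA) x \<and> PM Y (j \<cdot> q) h = u"
    using wf[unfolded ps_weq_def, rule_format, OF eA(1) x0' u' e0] by blast
  then obtain P Q j r H where rc: "rel_cylinder C eA P Q j r" and H: "H \<in> PS Y (Cod C j)"
    "PM Y (j \<cdot> P) H = f (Dom C i) x" "PM Y (j \<cdot> Q) H = u"
    using eA(4) by metis
  have xA: "x \<in> PS X (Dom C i)" using x eA by simp
  note R = rc_props[OF rc]
  note PQp = po_props[OF R(1)]
  have Pc: "P \<in> Cof C" using po_cof2[OF eA(1) R(1)] .
  have Qc: "Q \<in> Cof C" using po_cof[OF eA(1) R(1)] .
  define eP where "eP = j \<cdot> P"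
  define eQ where "eQ = j \<cdot> Q"
  have ePm: "eP \<in> Cof C" "eP \<in> Mor C" "Dom C eP = Dom C i" "Cod C eP = Cod C j"
    using R Pc PQp eA by (auto simp: eP_def)
  have eQm: "eQ \<in> Cof C" "eQ \<in> Mor C" "Dom C eQ = Dom C i" "Cod C eQ = Cod C j"
    using R Qc PQp eA by (auto simp: eQ_def)
  have rr: "r \<in> WE C" "r \<in> Mor C" "Dom C r = Cod C j" "Cod C r = Dom C i"
    "r \<cdot> eP = Id C (Dom C i)" "r \<cdot> eQ = Id C (Dom C i)"
    using R eA by (auto simp: eP_def eQ_def)
  have HP: "PM Y eP H = f (Dom C i) x" using H by (simp add: eP_def)
  have HQ: "PM Y eQ H = u" using H by (simp add: eQ_def)
  \<comment> \<open>Step 2: transport w along g H\<close>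
  obtain l1 k1 s1 t1 \<pi>1 where N1: "is_pushout C i eQ l1 k1"
    and s1: "s1 \<in> Cof C" "s1 \<in> WE C" "Dom C s1 = Cod C l1"
    and t1: "t1 \<in> Cof C" "t1 \<in> WE C" "Dom C t1 = Cod C i" "Cod C t1 = Cod C s1"
    and t1i: "t1 \<cdot> i = s1 \<cdot> (k1 \<cdot> eP)"
    and p1: "\<pi>1 \<in> WE C" "Dom C \<pi>1 = Cod C s1" "Cod C \<pi>1 = Cod C i"
    "\<pi>1 \<cdot> t1 = Id C (Cod C i)" "\<pi>1 \<cdot> (s1 \<cdot> l1) = Id C (Cod C i)" "\<pi>1 \<cdot> (s1 \<cdot> k1) = i \<cdot> r"
    by (rule mcyl[OF i eQm(1) ePm(1) eQm(3) ePm(3) _ rr(1) _ rr(4) rr(6) rr(5)])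
       (use ePm eQm rr in auto)
  note N1p = po_props[OF N1]
  have gH: "g (Cod C j) H \<in> PS Z (Cod C j)" using g H R by simp
  have "PM Z eQ (g (Cod C j) H) = g (Dom C eQ) (PM Y eQ H)"
    using pm_nat[OF g eQm(2), of H] H eQm by simp
  also have "\<dots> = PM Z i w" using HQ eQm e by simp
  finally have ee1: "PM Z i w = PM Z eQ (g (Cod C j) H)" by simp
  obtain m1 where m1: "m1 \<in> PS Z (Cod C l1)" "PM Z l1 m1 = w" "PM Z k1 m1 = g (Cod C j) H"
    using ps_glue[OF Z N1 i w _ ee1] gH eQm by auto
  obtain zh where zh: "zh \<in> PS Z (Cod C s1)" "PM Z s1 zh = m1"
    using ps_ext[OF Z s1(1,2)] m1 s1 by auto
  define w0 where "w0 = PM Z t1 zh"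
  have w0: "w0 \<in> PS Z (Cod C i)" using Z t1 zh by (simp add: w0_def)
  have Mors1: "s1 \<in> Mor C" "t1 \<in> Mor C" "l1 \<in> Mor C" "k1 \<in> Mor C" "\<pi>1 \<in> Mor C" using s1 t1 p1 N1p by auto
  have "PM Z i w0 = PM Z (t1 \<cdot> i) zh" using Z t1 zh im Mors1 by (simp add: w0_def)
  also have "\<dots> = PM Z (s1 \<cdot> (k1 \<cdot> eP)) zh" using t1i by simp
  also have "\<dots> = PM Z eP (PM Z k1 (PM Z s1 zh))" using Z Mors1 N1p(1-8) s1 ePm eQm zh m1(1) by simp
  also have "\<dots> = PM Z eP (g (Cod C j) H)" using zh m1 by simp
  also have "\<dots> = g (Dom C eP) (PM Y eP H)" using pm_nat[OF g ePm(2), of H] H ePm by simp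
  also have "\<dots> = ps_comp g f (Dom C i) x" using HP ePm by (simp add: ps_comp_def)
  finally have ee2: "ps_comp g f (Dom C i) x = PM Z i w0" by simp
  \<comment> \<open>Step 3: solve the transported problem using gf\<close>
  obtain a where a: "a \<in> PS X (Cod C i)" "PM X i a = x" and
    "\<exists>p q j r h. rel_cylinder C i p q j r \<and> h \<in> PS Z (Cod C j) \<and>
        PM Z (j \<cdot> p) h = ps_comp g f (Cod C i) a \<and> PM Z (j \<cdot> q) h = w0"
    using wgf[unfolded ps_weq_def, rule_format, OF i xA w0 ee2] by blast
  then obtain P' Q' j' r' K where rc': "rel_cylinder C i P' Q' j' r'" and K: "K \<in> PS Z (Cod C j')"
    "PM Z (j' \<cdot> P') K = g (Cod C i) (f (Cod C i) a)" "PM Z (j' \<cdot> Q') K = w0"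
    by (auto simp: ps_comp_def)
  note R' = rc_props[OF rc']
  note P'p = po_props[OF R'(1)]
  \<comment> \<open>Step 4: transport f a back along H\<close>
  obtain l0 k0 s0 t0 \<pi>0 where N0: "is_pushout C i eP l0 k0"
    and s0: "s0 \<in> Cof C" "s0 \<in> WE C" "Dom C s0 = Cod C l0"
    and t0: "t0 \<in> Cof C" "t0 \<in> WE C" "Dom C t0 = Cod C i" "Cod C t0 = Cod C s0"
    and t0i: "t0 \<cdot> i = s0 \<cdot> (k0 \<cdot> eQ)"
    and p0: "\<pi>0 \<in> WE C" "Dom C \<pi>0 = Cod C s0" "Cod C \<pi>0 = Cod C i"
    "\<pi>0 \<cdot> t0 = Id C (Cod C i)" "\<pi>0 \<cdot> (s0 \<cdot> l0) = Id C (Cod C i)" "\<pi>0 \<cdot> (s0 \<cdot> k0) = i \<cdot> r"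
    by (rule mcyl[OF i ePm(1) eQm(1) ePm(3) eQm(3) _ rr(1) _ rr(4) rr(5) rr(6)])
       (use ePm eQm rr in auto)
  note N0p = po_props[OF N0]
  have Mors0: "s0 \<in> Mor C" "t0 \<in> Mor C" "l0 \<in> Mor C" "k0 \<in> Mor C" "\<pi>0 \<in> Mor C" using s0 t0 p0 N0p by auto
  have fa: "f (Cod C i) a \<in> PS Y (Cod C i)" using f a B by simp
  have "PM Y i (f (Cod C i) a) = f (Dom C i) (PM X i a)" using pm_nat[OF f im a(1)] by simp
  also have "\<dots> = PM Y eP H" using a HP by simp
  finally have ee3: "PM Y i (f (Cod C i) a) = PM Y eP H" .
  have H': "H \<in> PS Y (Cod C eP)" using H ePm by simp
  obtain n0 where n0: "n0 \<in> PS Y (Cod C l0)" "PM Y l0 n0 = f (Cod C i) a" "PM Y k0 n0 = H"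
    using ps_glue[OF Y N0 i fa H' ee3] by blast
  obtain yh where yh: "yh \<in> PS Y (Cod C s0)" "PM Y s0 yh = n0"
    using ps_ext[OF Y s0(1,2)] n0 s0 by auto
  define b where "b = PM Y t0 yh"
  have b: "b \<in> PS Y (Cod C i)" using Y t0 yh by (simp add: b_def)
  have "PM Y i b = PM Y (t0 \<cdot> i) yh" using Y t0 yh im Mors0 by (simp add: b_def)
  also have "\<dots> = PM Y (s0 \<cdot> (k0 \<cdot> eQ)) yh" using t0i by simp
  also have "\<dots> = PM Y eQ (PM Y k0 (PM Y s0 yh))" using Y Mors0 N0p(1-8) s0 eQm ePm yh n0(1) by simp
  also have "\<dots> = u" using yh n0 HQ by simp
  finally have bu: "PM Y i b = u" .
  define d where "d = j' \<cdot> Q'"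
  have dm: "d \<in> Mor C" "Dom C d = Cod C i" "Cod C d = Cod C j'" using R' P'p by (auto simp: d_def)
  obtain \<beta>1 \<alpha>1 where E1: "is_pushout C t1 d \<beta>1 \<alpha>1" using po_ex[OF t1(1) dm(1)] dm t1 by auto
  note E1p = po_props[OF E1]
  have a1w: "\<alpha>1 \<in> WE C" using po_we[OF t1(1,2) E1] .
  have zh': "zh \<in> PS Z (Cod C t1)" using zh t1 by simp
  have K': "K \<in> PS Z (Cod C d)" using K dm by simp
  have ee4: "PM Z t1 zh = PM Z d K" using K(3) by (simp add: w0_def d_def)
  obtain e1 where e1: "e1 \<in> PS Z (Cod C \<beta>1)" "PM Z \<beta>1 e1 = zh" "PM Z \<alpha>1 e1 = K"
    using ps_glue[OF Z E1 t1(1) zh' K' ee4] by blast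
  note MM = im Mors1 Mors0 ePm(2-4) eQm(2-4) dm N1p(1-8) N0p(1-8) E1p(1-8) P'p(1-8) R'(4-8)
    s1(3) t1(3,4) s0(3) t0(3,4) p1(2,3) p0(2,3)
  have c5: "(\<alpha>1 \<cdot> (j' \<cdot> P')) \<cdot> i = (\<beta>1 \<cdot> (s1 \<cdot> k1)) \<cdot> eP"
  proof -
    have "(\<alpha>1 \<cdot> (j' \<cdot> P')) \<cdot> i = \<alpha>1 \<cdot> (j' \<cdot> (P' \<cdot> i))" using MM by simp
    also have "\<dots> = \<alpha>1 \<cdot> (j' \<cdot> (Q' \<cdot> i))" using P'p(9) by simp
    also have "\<dots> = (\<alpha>1 \<cdot> d) \<cdot> i" using MM by (simp add: d_def)
    also have "\<dots> = (\<beta>1 \<cdot> t1) \<cdot> i" using E1p(9) by simp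
    also have "\<dots> = \<beta>1 \<cdot> (t1 \<cdot> i)" using MM by simp
    also have "\<dots> = \<beta>1 \<cdot> (s1 \<cdot> (k1 \<cdot> eP))" using t1i by simp
    also have "\<dots> = (\<beta>1 \<cdot> (s1 \<cdot> k1)) \<cdot> eP" using MM by simp
    finally show ?thesis .
  qed
  obtain \<nu> where nu: "\<nu> \<in> Mor C" "Dom C \<nu> = Cod C l0" "Cod C \<nu> = Cod C \<beta>1"
      "\<nu> \<cdot> l0 = \<alpha>1 \<cdot> (j' \<cdot> P')" "\<nu> \<cdot> k0 = \<beta>1 \<cdot> (s1 \<cdot> k1)"
    by (rule po_mapE[OF N0 _ _ _ _ _ _ c5]) (use MM in auto)
  obtain \<beta>0 \<gamma> where Bx: "is_pushout C s0 \<nu> \<beta>0 \<gamma>" using po_ex[OF s0(1) nu(1)] nu(2) s0(3) by auto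
  note Bxp = po_props[OF Bx]
  have gw: "\<gamma> \<in> WE C" using po_we[OF s0(1,2) Bx] .
  have gyh: "g (Cod C s0) yh \<in> PS Z (Cod C s0)" using g yh Mors0 by simp
  have e1': "e1 \<in> PS Z (Cod C \<nu>)" using e1 nu by simp
  note MM2 = MM nu(1-3) Bxp(1-8)
  have ee5: "PM Z s0 (g (Cod C s0) yh) = PM Z \<nu> e1"
  proof (rule ps_glue_uniq[OF Z N0 i])
    show "PM Z s0 (g (Cod C s0) yh) \<in> PS Z (Cod C l0)" using Z s0 gyh Mors0 by simp
    show "PM Z \<nu> e1 \<in> PS Z (Cod C l0)" using Z nu e1' by simp
    have "PM Z l0 (PM Z s0 (g (Cod C s0) yh)) = PM Z l0 (g (Dom C s0) (PM Y s0 yh))"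
      using pm_nat[OF g Mors0(1), of yh] yh by simp
    also have "\<dots> = g (Dom C l0) (PM Y l0 n0)" using pm_nat[OF g Mors0(3), of n0] n0 yh s0 by simp
    also have "\<dots> = g (Cod C i) (f (Cod C i) a)" using n0 N0p by simp
    also have "\<dots> = PM Z (j' \<cdot> P') K" using K by simp
    also have "\<dots> = PM Z (\<alpha>1 \<cdot> (j' \<cdot> P')) e1"
    proof -
      have t: "Cod C (j' \<cdot> P') = Dom C \<alpha>1" "e1 \<in> PS Z (Cod C \<alpha>1)" "j' \<cdot> P' \<in> Mor C" using MM2 e1 by simp_all
      show ?thesis using ps_comp[OF Z t(3) E1p(4) t(1) t(2)] e1(3) by simp
    qed
    also have "\<dots> = PM Z (\<nu> \<cdot> l0) e1" using nu(4) by simp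
    also have "\<dots> = PM Z l0 (PM Z \<nu> e1)"
    proof -
      have t: "Cod C l0 = Dom C \<nu>" using MM2 by simp
      show ?thesis using ps_comp[OF Z N0p(3) nu(1) t e1'] .
    qed
    finally show "PM Z l0 (PM Z s0 (g (Cod C s0) yh)) = PM Z l0 (PM Z \<nu> e1)" .
    have "PM Z k0 (PM Z s0 (g (Cod C s0) yh)) = PM Z k0 (g (Dom C s0) (PM Y s0 yh))"
      using pm_nat[OF g Mors0(1), of yh] yh by simp
    also have "\<dots> = g (Dom C k0) (PM Y k0 n0)" using pm_nat[OF g Mors0(4), of n0] n0 yh s0 N0p by simp
    also have "\<dots> = g (Cod C j) H" using n0 N0p ePm by simp
    also have "\<dots> = PM Z k1 (PM Z s1 (PM Z \<beta>1 e1))" using m1 zh e1 by simp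
    also have "\<dots> = PM Z (\<beta>1 \<cdot> (s1 \<cdot> k1)) e1"
    proof -
      have t: "Cod C (s1 \<cdot> k1) = Dom C \<beta>1" "s1 \<cdot> k1 \<in> Mor C" "Cod C k1 = Dom C s1" using MM2 s1 by simp_all
      have "PM Z (\<beta>1 \<cdot> (s1 \<cdot> k1)) e1 = PM Z (s1 \<cdot> k1) (PM Z \<beta>1 e1)"
        using ps_comp[OF Z t(2) E1p(3) t(1) e1(1)] .
      also have "\<dots> = PM Z k1 (PM Z s1 (PM Z \<beta>1 e1))"
        using ps_comp[OF Z N1p(4) Mors1(1) t(3)] e1(2) zh(1) by simp
      finally show ?thesis by simp
    qed
    also have "\<dots> = PM Z (\<nu> \<cdot> k0) e1" using nu(5) by simp
    also have "\<dots> = PM Z k0 (PM Z \<nu> e1)"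
    proof -
      have t: "Cod C k0 = Dom C \<nu>" using MM2 by simp
      show ?thesis using ps_comp[OF Z N0p(4) nu(1) t e1'] .
    qed
    finally show "PM Z k0 (PM Z s0 (g (Cod C s0) yh)) = PM Z k0 (PM Z \<nu> e1)" .
  qed
  obtain hb where hb: "hb \<in> PS Z (Cod C \<beta>0)" "PM Z \<beta>0 hb = g (Cod C s0) yh" "PM Z \<gamma> hb = e1"
    using ps_glue[OF Z Bx s0(1) gyh e1' ee5] by blast
  have c6: "\<pi>1 \<cdot> t1 = r' \<cdot> d" using p1(4) R'(10) by (simp add: d_def)
  obtain \<rho>E where rE: "\<rho>E \<in> Mor C" "Dom C \<rho>E = Cod C \<beta>1" "Cod C \<rho>E = Cod C i" "\<rho>E \<cdot> \<beta>1 = \<pi>1" "\<rho>E \<cdot> \<alpha>1 = r'"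
    by (rule po_mapE[OF E1 _ _ _ _ _ _ c6]) (use MM in auto)
  have rEw: "\<rho>E \<in> WE C" using we_cancel_r[OF a1w rE(1)] rE E1p R'(3) by simp
  note MM3 = MM2 rE(1-3)
  have c7: "\<pi>0 \<cdot> s0 = \<rho>E \<cdot> \<nu>"
  proof (rule po_uniq[OF N0])
    have "(\<pi>0 \<cdot> s0) \<cdot> l0 = \<pi>0 \<cdot> (s0 \<cdot> l0)" using MM3 by simp
    also have "\<dots> = Id C (Cod C i)" using p0(5) .
    also have "\<dots> = r' \<cdot> (j' \<cdot> P')" using R'(9) by simp
    also have "\<dots> = (\<rho>E \<cdot> \<alpha>1) \<cdot> (j' \<cdot> P')" using rE(5) by simp
    also have "\<dots> = \<rho>E \<cdot> (\<nu> \<cdot> l0)" using MM3 nu(4) by simp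
    also have "\<dots> = (\<rho>E \<cdot> \<nu>) \<cdot> l0" using MM3 by simp
    finally show "(\<pi>0 \<cdot> s0) \<cdot> l0 = (\<rho>E \<cdot> \<nu>) \<cdot> l0" .
    have "(\<pi>0 \<cdot> s0) \<cdot> k0 = \<pi>0 \<cdot> (s0 \<cdot> k0)" using MM3 by simp
    also have "\<dots> = i \<cdot> r" using p0(6) .
    also have "\<dots> = \<pi>1 \<cdot> (s1 \<cdot> k1)" using p1(6) by simp
    also have "\<dots> = (\<rho>E \<cdot> \<beta>1) \<cdot> (s1 \<cdot> k1)" using rE(4) by simp
    also have "\<dots> = \<rho>E \<cdot> (\<nu> \<cdot> k0)" using MM3 nu(5) by simp
    also have "\<dots> = (\<rho>E \<cdot> \<nu>) \<cdot> k0" using MM3 by simp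
    finally show "(\<pi>0 \<cdot> s0) \<cdot> k0 = (\<rho>E \<cdot> \<nu>) \<cdot> k0" .
  qed (use MM3 in auto)
  obtain \<rho>B where rB: "\<rho>B \<in> Mor C" "Dom C \<rho>B = Cod C \<beta>0" "Cod C \<rho>B = Cod C i" "\<rho>B \<cdot> \<beta>0 = \<pi>0" "\<rho>B \<cdot> \<gamma> = \<rho>E"
    by (rule po_mapE[OF Bx _ _ _ _ _ _ c7]) (use MM3 in auto)
  have rBw: "\<rho>B \<in> WE C" using we_cancel_r[OF gw rB(1)] rB Bxp rEw by simp
  note MM4 = MM3 rB(1-3)
  have c8: "(\<beta>0 \<cdot> t0) \<cdot> i = (\<gamma> \<cdot> (\<beta>1 \<cdot> (s1 \<cdot> l1))) \<cdot> i"
  proof -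
    have "(\<beta>0 \<cdot> t0) \<cdot> i = \<beta>0 \<cdot> (t0 \<cdot> i)" using MM4 by simp
    also have "\<dots> = \<beta>0 \<cdot> (s0 \<cdot> (k0 \<cdot> eQ))" using t0i by simp
    also have "\<dots> = (\<beta>0 \<cdot> s0) \<cdot> (k0 \<cdot> eQ)" using MM4 by simp
    also have "\<dots> = (\<gamma> \<cdot> \<nu>) \<cdot> (k0 \<cdot> eQ)" using Bxp(9) by simp
    also have "\<dots> = \<gamma> \<cdot> ((\<nu> \<cdot> k0) \<cdot> eQ)" using MM4 by simp
    also have "\<dots> = \<gamma> \<cdot> ((\<beta>1 \<cdot> (s1 \<cdot> k1)) \<cdot> eQ)" using nu(5) by simp
    also have "\<dots> = \<gamma> \<cdot> (\<beta>1 \<cdot> (s1 \<cdot> (k1 \<cdot> eQ)))" using MM4 by simp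
    also have "\<dots> = \<gamma> \<cdot> (\<beta>1 \<cdot> (s1 \<cdot> (l1 \<cdot> i)))" using N1p(9) by simp
    also have "\<dots> = (\<gamma> \<cdot> (\<beta>1 \<cdot> (s1 \<cdot> l1))) \<cdot> i" using MM4 by simp
    finally show ?thesis .
  qed
  obtain \<epsilon> where eps: "\<epsilon> \<in> Mor C" "Dom C \<epsilon> = Cod C P'" "Cod C \<epsilon> = Cod C \<beta>0"
      "\<epsilon> \<cdot> P' = \<beta>0 \<cdot> t0" "\<epsilon> \<cdot> Q' = \<gamma> \<cdot> (\<beta>1 \<cdot> (s1 \<cdot> l1))"
    by (rule po_mapE[OF R'(1) _ _ _ _ _ _ c8]) (use MM4 in auto)
  have x1: "\<rho>B \<cdot> (\<epsilon> \<cdot> P') = Id C (Cod C i)"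
  proof -
    have "\<rho>B \<cdot> (\<epsilon> \<cdot> P') = (\<rho>B \<cdot> \<beta>0) \<cdot> t0" using eps(4) MM4 by simp
    then show ?thesis using rB(4) p0(4) by simp
  qed
  have x2: "\<rho>B \<cdot> (\<epsilon> \<cdot> Q') = Id C (Cod C i)"
  proof -
    have "\<rho>B \<cdot> (\<epsilon> \<cdot> Q') = (\<rho>B \<cdot> \<gamma>) \<cdot> (\<beta>1 \<cdot> (s1 \<cdot> l1))" using eps(5) MM4 by simp
    also have "\<dots> = (\<rho>E \<cdot> \<beta>1) \<cdot> (s1 \<cdot> l1)" using rB(5) MM4 by simp
    also have "\<dots> = Id C (Cod C i)" using rE(4) p1(5) by simp
    finally show ?thesis .
  qed
  have y1: "PM Z (\<epsilon> \<cdot> P') hb = g (Cod C i) b"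
  proof -
    have t: "Cod C t0 = Dom C \<beta>0" using MM4 by simp
    have "PM Z (\<epsilon> \<cdot> P') hb = PM Z (\<beta>0 \<cdot> t0) hb" using eps(4) by simp
    also have "\<dots> = PM Z t0 (PM Z \<beta>0 hb)" using ps_comp[OF Z Mors0(2) Bxp(3) t hb(1)] .
    also have "\<dots> = PM Z t0 (g (Cod C s0) yh)" using hb by simp
    also have "\<dots> = g (Dom C t0) (PM Y t0 yh)" using pm_nat[OF g Mors0(2), of yh] yh t0 by simp
    also have "\<dots> = g (Cod C i) b" using t0 by (simp add: b_def)
    finally show ?thesis .
  qed
  have y2: "PM Z (\<epsilon> \<cdot> Q') hb = w"
  proof -
    have t: "Cod C (\<beta>1 \<cdot> (s1 \<cdot> l1)) = Dom C \<gamma>" "\<beta>1 \<cdot> (s1 \<cdot> l1) \<in> Mor C"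
      "Cod C (s1 \<cdot> l1) = Dom C \<beta>1" "s1 \<cdot> l1 \<in> Mor C" "Cod C l1 = Dom C s1"
      using MM4 s1 by simp_all
    have "PM Z (\<epsilon> \<cdot> Q') hb = PM Z (\<gamma> \<cdot> (\<beta>1 \<cdot> (s1 \<cdot> l1))) hb" using eps(5) by simp
    also have "\<dots> = PM Z (\<beta>1 \<cdot> (s1 \<cdot> l1)) (PM Z \<gamma> hb)" using ps_comp[OF Z t(2) Bxp(4) t(1)] hb(1) Bxp by simp
    also have "\<dots> = PM Z (\<beta>1 \<cdot> (s1 \<cdot> l1)) e1" using hb(3) by simp
    also have "\<dots> = PM Z (s1 \<cdot> l1) (PM Z \<beta>1 e1)" using ps_comp[OF Z t(4) E1p(3) t(3) e1(1)] .
    also have "\<dots> = PM Z (s1 \<cdot> l1) zh" using e1(2) by simp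
    also have "\<dots> = PM Z l1 (PM Z s1 zh)" using ps_comp[OF Z N1p(3) Mors1(1) t(5) zh(1)] .
    also have "\<dots> = w" using zh m1 by simp
    finally show ?thesis .
  qed
  have rd: "Dom C \<rho>B = Cod C \<epsilon>" using rB eps by simp
  have hb': "hb \<in> PS Z (Cod C \<epsilon>)" using hb eps by simp
  obtain jj rr' hh where "rel_cylinder C i P' Q' jj rr'" "hh \<in> PS Z (Cod C jj)"
    "PM Z (jj \<cdot> P') hh = PM Z (\<epsilon> \<cdot> P') hb" "PM Z (jj \<cdot> Q') hh = PM Z (\<epsilon> \<cdot> Q') hb"
    using gen[OF Z R'(1) eps(1,2) rBw rd rB(3) x1 x2 hb'] by blast
  then show "\<exists>a\<in>PS Y (Cod C i). PM Y i a = u \<and>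
           (\<exists>p q j r h. rel_cylinder C i p q j r \<and> h \<in> PS Z (Cod C j) \<and>
              PM Z (j \<cdot> p) h = g (Cod C i) a \<and> PM Z (j \<cdot> q) h = w)"
    using b bu y1 y2 by metis
qed

end

theorem mainTheorem7:
  fixes C :: "('o, 'm) cyl_category"
    and X Y Z :: "('o, 'm, 'v) presheaf"
    and f g :: "'o \<Rightarrow> 'v \<Rightarrow> 'v"
  assumes "cylinder_category C"
    and "is_presheaf C X" and "is_presheaf C Y" and "is_presheaf C Z"
    and "presheaf_mor C X Y f" and "presheaf_mor C Y Z g"
  shows "(ps_weq C X Y f \<and> ps_weq C Y Z g \<longrightarrow> ps_weq C X Z (ps_comp g f)) \<and>
         (ps_weq C X Y f \<and> ps_weq C X Z (ps_comp g f) \<longrightarrow> ps_weq C Y Z g) \<and>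
         (ps_weq C Y Z g \<and> ps_weq C X Z (ps_comp g f) \<longrightarrow> ps_weq C X Y f)"
proof -
  interpret cyl C by (rule cyl.intro) (rule assms(1))
  show ?thesis
    using cyl.case1[OF cyl_axioms assms(2-6)] cyl.case2[OF cyl_axioms assms(2-6)]
      cyl.case3[OF cyl_axioms assms(2-6)] by blast
qed

end
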